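(* There exist absolute constants $C_1,C_2>0$ such that the following holds. Let $\Xi=A-P_*$, let $\mathrm{Pen}$ be any penalty function, and let $(\hat\Theta,\hat Z,\hat J,\hat K)$ be a solution of $$\min_{\Theta,Z,J,K}\Big\{\sum_{k,l=1}^K\|A^{(k,l)}(Z,K)-\Theta^{(k,l)}\|_F^2+\mathrm{Pen}(n,J,K)\Big\}$$ over $K\in\{1,\dots,n\}$, $Z\in\mathcal M_{n,K}$, sparsity families $J$ for $(Z,K)$ and block matrices $\Theta$ with rank-one blocks $\Theta^{(k,l)}$ supported on $J_{k,l}\times J_{l,k}$. Then for any $t>0$, $$\mathbb P\Big\{\sum_{k,l=1}^{\hat K}\big\|\Pi_{\hat J^{(k,l)}}(\Xi^{(k,l)}(\hat Z,\hat K))\big\|_{op}^2-F_1(n,\hat J,\hat K)\le C_2t\Big\}\ge1-e^{-t},$$ where $F_1$ may be taken to be either $F_1^{(ns)}(n,J,K)=(C_1+C_2)|J|\ln(nKe/|J|)+C_2(3\ln n+n\ln K)$ or $F_1^{(s)}(n,J,K)=(C_1+C_2)\sum_{k,l=1}^K|J_{k,l}|\ln(n_ke/|J_{k,l}|)+C_2\big(\ln n+n\ln K+K\sum_{k=1}^K\ln n_k\big)$, the $n_k$ being the community sizes of $\hat Z$.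
   Context: $A\in\{0,1\}^{n\times n}$ symmetric, $A_{ij}\sim\mathrm{Bernoulli}((P_* )_{ij})$ independent for $1\le i\le j\le n$, $P_*$ symmetric. $\mathcal M_{n,K}$: clustering matrices $Z\in\{0,1\}^{n\times K}$ (one $1$ per row), community $\mathcal N_k$ of size $n_k$. For $B\in\mathbb R^{n\times n}$, $B^{(k,l)}(Z,K)\in\mathbb R^{n_k\times n_l}$ is the block with rows in $\mathcal N_k$ and columns in $\mathcal N_l$ after reordering nodes by community. A sparsity family is $J=(J_{k,l})_{k,l=1}^K$ with $J_{k,l}\subseteq\mathcal N_k$, $J^{(k,l)}=J_{k,l}\times J_{l,k}$, $|J|=\sum_{k,l}|J_{k,l}|$; $\Pi_{J^{(k,l)}}(X)$ zeroes entries outside $J^{(k,l)}$. Convention $0\cdot\ln(c/0)=0$. *)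

theory Defs
  imports "HOL-Probability.Probability"
begin

(* Nodes are 0..<n, communities are 0..<K. A clustering matrix Z in M_{n,K}
   is represented by its label function z : node -> community. *)

definition clustering :: "nat \<Rightarrow> nat \<Rightarrow> (nat \<Rightarrow> nat) \<Rightarrow> bool" where
  "clustering n K z \<longleftrightarrow> (\<forall>i<n. z i < K)"

definition comm :: "nat \<Rightarrow> (nat \<Rightarrow> nat) \<Rightarrow> nat \<Rightarrow> nat set" where
  "comm n z k = {i. i < n \<and> z i = k}"

definition csize :: "nat \<Rightarrow> (nat \<Rightarrow> nat) \<Rightarrow> nat \<Rightarrow> nat" where
  "csize n z k = card (comm n z k)"

definition sparsity_family :: "nat \<Rightarrow> nat \<Rightarrow> (nat \<Rightarrow> nat) \<Rightarrow> (nat \<Rightarrow> nat \<Rightarrow> nat set) \<Rightarrow> bool" where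
  "sparsity_family n K z J \<longleftrightarrow>
     (\<forall>k<K. \<forall>l<K. J k l \<subseteq> comm n z k) \<and> (\<forall>k l. K \<le> k \<or> K \<le> l \<longrightarrow> J k l = {})"

definition Jcard :: "nat \<Rightarrow> (nat \<Rightarrow> nat \<Rightarrow> nat set) \<Rightarrow> nat" where
  "Jcard K J = (\<Sum>k<K. \<Sum>l<K. card (J k l))"

definition rank_one_blocks :: "nat \<Rightarrow> nat \<Rightarrow> (nat \<Rightarrow> nat) \<Rightarrow> (nat \<Rightarrow> nat \<Rightarrow> nat set)
    \<Rightarrow> (nat \<Rightarrow> nat \<Rightarrow> real) \<Rightarrow> bool" where
  "rank_one_blocks n K z J \<Theta> \<longleftrightarrow>
     (\<forall>k<K. \<forall>l<K. \<exists>u v :: nat \<Rightarrow> real.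
        (\<forall>i. i \<notin> J k l \<longrightarrow> u i = 0) \<and> (\<forall>j. j \<notin> J l k \<longrightarrow> v j = 0) \<and>
        (\<forall>i\<in>comm n z k. \<forall>j\<in>comm n z l. \<Theta> i j = u i * v j))"

definition feasible :: "nat \<Rightarrow> (nat \<Rightarrow> nat \<Rightarrow> real) \<Rightarrow> (nat \<Rightarrow> nat) \<Rightarrow> (nat \<Rightarrow> nat \<Rightarrow> nat set)
    \<Rightarrow> nat \<Rightarrow> bool" where
  "feasible n \<Theta> z J K \<longleftrightarrow>
     K \<in> {1..n} \<and> clustering n K z \<and> sparsity_family n K z J \<and> rank_one_blocks n K z J \<Theta>"

definition objective :: "nat \<Rightarrow> (nat \<Rightarrow> (nat \<Rightarrow> nat \<Rightarrow> nat set) \<Rightarrow> nat \<Rightarrow> real)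
    \<Rightarrow> (nat \<Rightarrow> nat \<Rightarrow> bool) \<Rightarrow> (nat \<Rightarrow> nat \<Rightarrow> real) \<Rightarrow> (nat \<Rightarrow> nat)
    \<Rightarrow> (nat \<Rightarrow> nat \<Rightarrow> nat set) \<Rightarrow> nat \<Rightarrow> real" where
  "objective n Pen A \<Theta> z J K =
     (\<Sum>k<K. \<Sum>l<K. \<Sum>i\<in>comm n z k. \<Sum>j\<in>comm n z l. (of_bool (A i j) - \<Theta> i j)\<^sup>2) + Pen n J K"

definition op_norm :: "nat set \<Rightarrow> nat set \<Rightarrow> (nat \<Rightarrow> nat \<Rightarrow> real) \<Rightarrow> real" where
  "op_norm I C M = Sup {sqrt (\<Sum>i\<in>I. (\<Sum>j\<in>C. M i j * x j)\<^sup>2) | x. (\<Sum>j\<in>C. (x j)\<^sup>2) \<le> 1}"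

definition proj_block :: "(nat \<Rightarrow> nat \<Rightarrow> nat set) \<Rightarrow> nat \<Rightarrow> nat \<Rightarrow> (nat \<Rightarrow> nat \<Rightarrow> real)
    \<Rightarrow> nat \<Rightarrow> nat \<Rightarrow> real" where
  "proj_block J k l X i j = (if i \<in> J k l \<and> j \<in> J l k then X i j else 0)"

definition proj_op_sum :: "nat \<Rightarrow> (nat \<Rightarrow> nat) \<Rightarrow> (nat \<Rightarrow> nat \<Rightarrow> nat set) \<Rightarrow> nat
    \<Rightarrow> (nat \<Rightarrow> nat \<Rightarrow> real) \<Rightarrow> real" where
  "proj_op_sum n z J K X =
     (\<Sum>k<K. \<Sum>l<K. (op_norm (comm n z k) (comm n z l) (proj_block J k l X))\<^sup>2)"

definition adj_pmf :: "nat \<Rightarrow> (nat \<Rightarrow> nat \<Rightarrow> real) \<Rightarrow> (nat \<Rightarrow> nat \<Rightarrow> bool) pmf" where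
  "adj_pmf n P = map_pmf (\<lambda>b i j. if i \<le> j then b (i, j) else b (j, i))
     (Pi_pmf {(i, j). i \<le> j \<and> j < n} False (\<lambda>(i, j). bernoulli_pmf (P i j)))"

(* the two choices of F_1; convention 0 * ln(c/0) = 0 holds since x/0 = 0 and ln 0 = 0 *)
definition F1_ns :: "real \<Rightarrow> real \<Rightarrow> nat \<Rightarrow> (nat \<Rightarrow> nat \<Rightarrow> nat set) \<Rightarrow> nat \<Rightarrow> real" where
  "F1_ns C1 C2 n J K =
     (C1 + C2) * real (Jcard K J) * ln (real n * real K * exp 1 / real (Jcard K J))
     + C2 * (3 * ln (real n) + real n * ln (real K))"

definition F1_s :: "real \<Rightarrow> real \<Rightarrow> nat \<Rightarrow> (nat \<Rightarrow> nat) \<Rightarrow> (nat \<Rightarrow> nat \<Rightarrow> nat set) \<Rightarrow> nat \<Rightarrow> real" where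
  "F1_s C1 C2 n z J K =
     (C1 + C2) * (\<Sum>k<K. \<Sum>l<K. real (card (J k l)) * ln (real (csize n z k) * exp 1 / real (card (J k l))))
     + C2 * (ln (real n) + real n * ln (real K) + real K * (\<Sum>k<K. ln (real (csize n z k))))"

end

theory Submission
  imports Defs
begin

lemma sum_sym:
  fixes g :: "nat \<Rightarrow> nat \<Rightarrow> real"
  shows "(\<Sum>i<n. \<Sum>j<n. g i j) =
    (\<Sum>p\<in>{(i,j). i \<le> j \<and> j < n}. if fst p = snd p then g (fst p) (fst p) else g (fst p) (snd p) + g (snd p) (fst p))"
proof (induction n)
  case 0
  then show ?case by simp
next
  case (Suc n)
  have eq: "{(i,j). i \<le> j \<and> j < Suc n} = {(i,j). i \<le> j \<and> j < n} \<union> (\<lambda>i. (i,n)) ` {..n}"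
    by auto
  have fin: "finite {(i,j). i \<le> j \<and> j < n}"
    by (rule finite_subset[of _ "{..n} \<times> {..n}"]) auto
  have disj: "{(i,j). i \<le> j \<and> j < n} \<inter> (\<lambda>i. (i,n)) ` {..n} = {}" by auto
  let ?h = "\<lambda>p. if fst p = snd p then g (fst p) (fst p) else g (fst p) (snd p) + g (snd p) (fst p)"
  have "(\<Sum>p\<in>{(i,j). i \<le> j \<and> j < Suc n}. ?h p) =
      (\<Sum>p\<in>{(i,j). i \<le> j \<and> j < n}. ?h p) + (\<Sum>p\<in>(\<lambda>i. (i,n)) ` {..n}. ?h p)"
    unfolding eq by (rule sum.union_disjoint[OF fin _ disj]) auto
  also have "(\<Sum>p\<in>(\<lambda>i. (i,n)) ` {..n}. ?h p) = (\<Sum>i\<le>n. ?h (i,n))"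
    by (subst sum.reindex) (auto simp: inj_on_def)
  also have "\<dots> = (\<Sum>i<n. g i n + g n i) + g n n"
    unfolding lessThan_Suc_atMost[symmetric] by simp
  finally have R: "(\<Sum>p\<in>{(i,j). i \<le> j \<and> j < Suc n}. ?h p) = (\<Sum>p\<in>{(i,j). i \<le> j \<and> j < n}. ?h p) + ((\<Sum>i<n. g i n + g n i) + g n n)" .
  have L: "(\<Sum>i<Suc n. \<Sum>j<Suc n. g i j) = (\<Sum>i<n. \<Sum>j<n. g i j) + ((\<Sum>i<n. g i n + g n i) + g n n)"
    by (simp add: sum.distrib)
  show ?case unfolding L R Suc by simp
qed

lemma hoeff_adj:
  fixes w :: "nat \<Rightarrow> nat \<Rightarrow> real"
  assumes P: "\<forall>i j. 0 \<le> P i j \<and> P i j \<le> 1 \<and> P i j = P j i"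
    and w: "(\<Sum>i<n. \<Sum>j<n. (w i j)\<^sup>2) \<le> 1" and r: "r > 0"
  shows "measure_pmf.prob (adj_pmf n P)
     {A. (\<Sum>i<n. \<Sum>j<n. w i j * (of_bool (A i j) - P i j)) \<ge> r} \<le> exp (- r\<^sup>2)"
proof -
  define I where "I = {(i,j). i \<le> j \<and> j < (n::nat)}"
  define M where "M = Pi_pmf I False (\<lambda>(i,j). bernoulli_pmf (P i j))"
  define f where "f = (\<lambda>(b::nat\<times>nat \<Rightarrow> bool) (i::nat) (j::nat). if i \<le> j then b (i, j) else b (j, i))"
  define c where "c = (\<lambda>p::nat\<times>nat. if fst p = snd p then w (fst p) (fst p) else w (fst p) (snd p) + w (snd p) (fst p))"
  define X where "X = (\<lambda>p (b::nat\<times>nat \<Rightarrow> bool). c p * (of_bool (b p) - P (fst p) (snd p)))"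
  have finI: "finite I" unfolding I_def
    by (rule finite_subset[of _ "{..n} \<times> {..n}"]) auto
  have adj: "adj_pmf n P = map_pmf f M" unfolding adj_pmf_def f_def M_def I_def by simp
  have sumeq: "(\<Sum>i<n. \<Sum>j<n. w i j * (of_bool (f b i j) - P i j)) = (\<Sum>p\<in>I. X p b)" for b
  proof -
    have "(\<Sum>i<n. \<Sum>j<n. w i j * (of_bool (f b i j) - P i j)) =
      (\<Sum>p\<in>I. if fst p = snd p then w (fst p) (fst p) * (of_bool (f b (fst p) (fst p)) - P (fst p) (fst p))
          else w (fst p) (snd p) * (of_bool (f b (fst p) (snd p)) - P (fst p) (snd p))
             + w (snd p) (fst p) * (of_bool (f b (snd p) (fst p)) - P (snd p) (fst p)))"
      unfolding I_def by (rule sum_sym)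
    also have "\<dots> = (\<Sum>p\<in>I. X p b)"
    proof (rule sum.cong[OF refl])
      fix p assume "p \<in> I"
      then obtain i j where p: "p = (i,j)" "i \<le> j" by (auto simp: I_def)
      show "(if fst p = snd p then w (fst p) (fst p) * (of_bool (f b (fst p) (fst p)) - P (fst p) (fst p))
          else w (fst p) (snd p) * (of_bool (f b (fst p) (snd p)) - P (fst p) (snd p))
             + w (snd p) (fst p) * (of_bool (f b (snd p) (fst p)) - P (snd p) (fst p))) = X p b"
        using p P by (auto simp: X_def c_def f_def algebra_simps)
    qed
    finally show ?thesis .
  qed
  have c2: "(\<Sum>p\<in>I. (c p)\<^sup>2) \<le> 2"
  proof -
    have "(\<Sum>p\<in>I. (c p)\<^sup>2) \<le> (\<Sum>p\<in>I. if fst p = snd p then 2 * (w (fst p) (fst p))\<^sup>2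
         else 2 * (w (fst p) (snd p))\<^sup>2 + 2 * (w (snd p) (fst p))\<^sup>2)"
    proof (rule sum_mono)
      fix p
      have "(a + b)\<^sup>2 \<le> 2 * a\<^sup>2 + 2 * b\<^sup>2" for a b :: real
      proof -
        have "(a + b)\<^sup>2 = 2 * a\<^sup>2 + 2 * b\<^sup>2 - (a - b)\<^sup>2" by (simp add: power2_eq_square algebra_simps)
        then show ?thesis using zero_le_power2[of "a - b"] by linarith
      qed
      then show "(c p)\<^sup>2 \<le> (if fst p = snd p then 2 * (w (fst p) (fst p))\<^sup>2
         else 2 * (w (fst p) (snd p))\<^sup>2 + 2 * (w (snd p) (fst p))\<^sup>2)"
        by (auto simp: c_def)
    qed
    also have "\<dots> = (\<Sum>i<n. \<Sum>j<n. 2 * (w i j)\<^sup>2)"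
      unfolding I_def by (rule sum_sym[symmetric])
    also have "\<dots> = 2 * (\<Sum>i<n. \<Sum>j<n. (w i j)\<^sup>2)"
      by (simp add: sum_distrib_left)
    finally show ?thesis using w by linarith
  qed
  have "measure_pmf.prob (adj_pmf n P)
     {A. (\<Sum>i<n. \<Sum>j<n. w i j * (of_bool (A i j) - P i j)) \<ge> r}
     = measure_pmf.prob M {b. (\<Sum>p\<in>I. X p b) \<ge> r}"
    unfolding adj by (simp add: sumeq vimage_def)
  also have "\<dots> \<le> exp (- r\<^sup>2)"
  proof (cases "(\<Sum>p\<in>I. (c p)\<^sup>2) = 0")
    case True
    then have "\<forall>p\<in>I. c p = 0" using finI by (simp add: sum_nonneg_eq_0_iff)
    then have "{b. (\<Sum>p\<in>I. X p b) \<ge> r} = {}" using r by (auto simp: X_def)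
    then show ?thesis by simp
  next
    case False
    then have pos: "(\<Sum>p\<in>I. (c p)\<^sup>2) > 0" by (simp add: sum_nonneg order_le_neq_trans)
    define a where "a = (\<lambda>p. min (c p * (0 - P (fst p) (snd p))) (c p * (1 - P (fst p) (snd p))))"
    define bb where "bb = (\<lambda>p. max (c p * (0 - P (fst p) (snd p))) (c p * (1 - P (fst p) (snd p))))"
    have ba: "(bb p - a p)\<^sup>2 = (c p)\<^sup>2" for p
      by (auto simp: a_def bb_def min_def max_def algebra_simps power2_eq_square)
    have expX: "measure_pmf.expectation M (X p) = 0" if "p \<in> I" for p
    proof -
      have "measure_pmf.expectation M (X p) =
          measure_pmf.expectation (map_pmf (\<lambda>b. b p) M) (\<lambda>x. c p * (of_bool x - P (fst p) (snd p)))"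
        by (simp add: X_def)
      also have "map_pmf (\<lambda>b. b p) M = bernoulli_pmf (P (fst p) (snd p))"
        unfolding M_def using that finI by (subst Pi_pmf_component) (auto split: prod.splits)
      also have "measure_pmf.expectation (bernoulli_pmf (P (fst p) (snd p)))
          (\<lambda>x. c p * (of_bool x - P (fst p) (snd p))) = 0"
        using P by (simp add: of_bool_def algebra_simps)
      finally show ?thesis .
    qed
    interpret H: Hoeffding_ineq "measure_pmf M" I X a bb "\<Sum>p\<in>I. measure_pmf.expectation M (X p)"
    proof unfold_locales
      show "finite I" by (rule finI)
      show "prob_space.indep_vars (measure_pmf M) (\<lambda>_. borel) X I"
        unfolding M_def X_def
        by (intro prob_space.indep_vars_compose2[OF _ indep_vars_Pi_pmf[OF finI], where Y = "\<lambda>p x. c p * (of_bool x - P (fst p) (snd p))", unfolded o_def])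
           (auto simp: measure_pmf.prob_space_axioms)
      fix p assume "p \<in> I"
      show "AE x in measure_pmf M. X p x \<in> {a p..bb p}"
        by (intro AE_I2) (auto simp: X_def a_def bb_def)
    qed simp
    have mu: "(\<Sum>p\<in>I. measure_pmf.expectation M (X p)) = 0"
      using expX by simp
    have "measure_pmf.prob M {b. (\<Sum>p\<in>I. X p b) \<ge> r} \<le> exp (-2 * r\<^sup>2 / (\<Sum>p\<in>I. (bb p - a p)\<^sup>2))"
      using H.Hoeffding_ineq_ge[of r] r pos by (simp add: ba mu)
    also have "\<dots> \<le> exp (- r\<^sup>2)"
    proof -
      have "2 * r\<^sup>2 / (\<Sum>p\<in>I. (c p)\<^sup>2) \<ge> 2 * r\<^sup>2 / 2"
        using pos c2 r by (intro divide_left_mono) auto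
      then show ?thesis by (simp add: ba)
    qed
    finally show ?thesis .
  qed
  finally show ?thesis .
qed

lemma opn_elem_bound:
  fixes M :: "nat \<Rightarrow> nat \<Rightarrow> real"
  assumes "(\<Sum>j\<in>C. (x j)\<^sup>2) \<le> 1"
  shows "sqrt (\<Sum>i\<in>I. (\<Sum>j\<in>C. M i j * x j)\<^sup>2) \<le> sqrt (\<Sum>i\<in>I. \<Sum>j\<in>C. (M i j)\<^sup>2)"
proof -
  have "(\<Sum>j\<in>C. M i j * x j)\<^sup>2 \<le> (\<Sum>j\<in>C. (M i j)\<^sup>2)" for i
  proof -
    have "(\<Sum>j\<in>C. M i j * x j)\<^sup>2 \<le> (\<Sum>j\<in>C. (M i j)\<^sup>2) * (\<Sum>j\<in>C. (x j)\<^sup>2)"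
      by (rule Cauchy_Schwarz_ineq_sum)
    also have "\<dots> \<le> (\<Sum>j\<in>C. (M i j)\<^sup>2) * 1"
      by (intro mult_left_mono assms sum_nonneg) auto
    finally show ?thesis by simp
  qed
  then show ?thesis by (intro real_sqrt_le_mono sum_mono) auto
qed

lemma opn_set_ne: fixes M :: "nat \<Rightarrow> nat \<Rightarrow> real" shows "{sqrt (\<Sum>i\<in>I. (\<Sum>j\<in>C. M i j * x j)\<^sup>2) | x. (\<Sum>j\<in>C. (x j)\<^sup>2) \<le> 1} \<noteq> {}"
proof -
  have "sqrt (\<Sum>i\<in>I. (\<Sum>j\<in>C. M i j * (\<lambda>_. 0) j)\<^sup>2) \<in> {sqrt (\<Sum>i\<in>I. (\<Sum>j\<in>C. M i j * x j)\<^sup>2) | x. (\<Sum>j\<in>C. (x j)\<^sup>2) \<le> 1}"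
    by (rule CollectI, rule exI[of _ "\<lambda>_. 0"]) simp
  then show ?thesis by blast
qed

lemma opn_set_bdd: fixes M :: "nat \<Rightarrow> nat \<Rightarrow> real" shows "bdd_above {sqrt (\<Sum>i\<in>I. (\<Sum>j\<in>C. M i j * x j)\<^sup>2) | x. (\<Sum>j\<in>C. (x j)\<^sup>2) \<le> 1}"
  unfolding bdd_above_def
  by (intro exI[of _ "sqrt (\<Sum>i\<in>I. \<Sum>j\<in>C. (M i j)\<^sup>2)"]) (use opn_elem_bound[where I=I and C=C and M=M] in blast)

lemma op_norm_ge: 
  assumes "(\<Sum>j\<in>C. (x j)\<^sup>2) \<le> 1"
  shows "sqrt (\<Sum>i\<in>I. (\<Sum>j\<in>C. M i j * x j)\<^sup>2) \<le> op_norm I C M"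
  unfolding op_norm_def by (rule cSup_upper[OF _ opn_set_bdd]) (use assms in blast)

lemma op_norm_nonneg: "0 \<le> op_norm I C M"
  using op_norm_ge[where C=C and x="\<lambda>_. 0" and I=I and M=M] by simp

lemma op_norm_le_frob: "op_norm I C M \<le> sqrt (\<Sum>i\<in>I. \<Sum>j\<in>C. (M i j)\<^sup>2)"
  unfolding op_norm_def by (rule cSup_least[OF opn_set_ne]) (use opn_elem_bound in blast)

lemma op_norm_approx:
  assumes "\<delta> > 0"
  shows "\<exists>x. (\<Sum>j\<in>C. (x j)\<^sup>2) \<le> 1 \<and> op_norm I C M - \<delta> < sqrt (\<Sum>i\<in>I. (\<Sum>j\<in>C. M i j * x j)\<^sup>2)"
proof -
  have "op_norm I C M - \<delta> < op_norm I C M" using assms by simp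
  then obtain y where "y \<in> {sqrt (\<Sum>i\<in>I. (\<Sum>j\<in>C. M i j * x j)\<^sup>2) | x. (\<Sum>j\<in>C. (x j)\<^sup>2) \<le> 1}"
      "op_norm I C M - \<delta> < y"
    unfolding op_norm_def using less_cSupD[OF opn_set_ne] by blast
  then show ?thesis by blast
qed

definition Du :: "nat \<Rightarrow> nat \<Rightarrow> (nat \<Rightarrow> nat) \<Rightarrow> (nat \<Rightarrow> nat \<Rightarrow> nat set) \<Rightarrow> (nat \<times> nat) set" where
  "Du n K z J = {(i,l). i < n \<and> l < K \<and> i \<in> J (z i) l}"

definition Dv :: "nat \<Rightarrow> nat \<Rightarrow> (nat \<Rightarrow> nat) \<Rightarrow> (nat \<Rightarrow> nat \<Rightarrow> nat set) \<Rightarrow> (nat \<times> nat) set" where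
  "Dv n K z J = {(k,j). k < K \<and> j < n \<and> j \<in> J (z j) k}"

definition Uset :: "nat \<Rightarrow> nat \<Rightarrow> (nat \<Rightarrow> nat) \<Rightarrow> (nat \<Rightarrow> nat \<Rightarrow> nat set) \<Rightarrow> (nat \<times> nat \<Rightarrow> real) set" where
  "Uset n K z J = {u. (\<forall>p. p \<notin> Du n K z J \<longrightarrow> u p = 0) \<and> (\<Sum>p\<in>Du n K z J. (u p)\<^sup>2) \<le> 1}"

definition Vset :: "nat \<Rightarrow> nat \<Rightarrow> (nat \<Rightarrow> nat) \<Rightarrow> (nat \<Rightarrow> nat \<Rightarrow> nat set) \<Rightarrow> (nat \<times> nat \<Rightarrow> real) set" where
  "Vset n K z J = {v. (\<forall>p. p \<notin> Dv n K z J \<longrightarrow> v p = 0) \<and> (\<forall>k<K. \<forall>l<K. (\<Sum>j\<in>J l k. (v (k,j))\<^sup>2) \<le> 1)}"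

definition Fb :: "nat \<Rightarrow> (nat \<Rightarrow> nat) \<Rightarrow> (nat \<Rightarrow> nat \<Rightarrow> real) \<Rightarrow> (nat \<times> nat \<Rightarrow> real) \<Rightarrow> (nat \<times> nat \<Rightarrow> real) \<Rightarrow> real" where
  "Fb n z X u v = (\<Sum>i<n. \<Sum>j<n. u (i, z j) * v (z i, j) * X i j)"

lemma sf_mem:
  assumes "sparsity_family n K z J" "i \<in> J k l"
  shows "k < K \<and> l < K \<and> i < n \<and> z i = k"
proof -
  have A: "\<forall>k<K. \<forall>l<K. J k l \<subseteq> comm n z k" and B: "\<forall>k l. K \<le> k \<or> K \<le> l \<longrightarrow> J k l = {}"
    using assms(1) unfolding sparsity_family_def by blast+
  have kl: "k < K \<and> l < K"
  proof (rule ccontr)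
    assume "\<not> (k < K \<and> l < K)"
    then have "J k l = {}" using B by auto
    then show False using assms(2) by auto
  qed
  then have "i \<in> comm n z k" using A assms(2) by blast
  then show ?thesis using kl by (auto simp: comm_def)
qed

lemma sf_sub: "sparsity_family n K z J \<Longrightarrow> J k l \<subseteq> comm n z k"
  using sf_mem[of n K z J _ k l] by (auto simp: comm_def)

lemma sf_fin: "sparsity_family n K z J \<Longrightarrow> finite (J k l)"
  by (rule finite_subset[OF sf_sub]) (auto simp: comm_def)

lemma Du_iff: "sparsity_family n K z J \<Longrightarrow> (p \<in> Du n K z J) = (fst p \<in> J (z (fst p)) (snd p))"
  using sf_mem[of n K z J "fst p" "z (fst p)" "snd p"] by (cases p) (auto simp: Du_def)

lemma Dv_iff: "sparsity_family n K z J \<Longrightarrow> (p \<in> Dv n K z J) = (snd p \<in> J (z (snd p)) (fst p))"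
  using sf_mem[of n K z J "snd p" "z (snd p)" "fst p"] by (cases p) (auto simp: Dv_def)

lemma Du_sub: "Du n K z J \<subseteq> {..<n} \<times> {..<K}" by (auto simp: Du_def)
lemma Dv_sub: "Dv n K z J \<subseteq> {..<K} \<times> {..<n}" by (auto simp: Dv_def)
lemma Du_fin: "finite (Du n K z J)" by (rule finite_subset[OF Du_sub]) auto
lemma Dv_fin: "finite (Dv n K z J)" by (rule finite_subset[OF Dv_sub]) auto

lemma DU_sum:
  assumes sf: "sparsity_family n K z J"
  shows "(\<Sum>p\<in>Du n K z J. g p) = (\<Sum>k<K. \<Sum>l<K. \<Sum>i\<in>J k l. g (i,l))"
proof -
  let ?S = "Sigma ({..<K} \<times> {..<K}) (\<lambda>kl. J (fst kl) (snd kl))"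
  let ?h = "\<lambda>q::(nat\<times>nat)\<times>nat. (snd q, snd (fst q))"
  have inj: "inj_on ?h ?S"
  proof (rule inj_onI)
    fix a b assume a: "a \<in> ?S" and b: "b \<in> ?S" and e: "?h a = ?h b"
    obtain k l i where A: "a = ((k,l),i)" "i \<in> J k l" using a by auto
    obtain k' l' i' where B: "b = ((k',l'),i')" "i' \<in> J k' l'" using b by auto
    have "z i = k" "z i' = k'" using sf_mem[OF sf A(2)] sf_mem[OF sf B(2)] by auto
    then show "a = b" using A B e by auto
  qed
  have img: "?h ` ?S = Du n K z J"
  proof
    show "?h ` ?S \<subseteq> Du n K z J"
      using sf_mem[OF sf] by (auto simp: Du_def)
    show "Du n K z J \<subseteq> ?h ` ?S"
    proof
      fix p assume "p \<in> Du n K z J"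
      then obtain i l where p: "p = (i,l)" "i < n" "l < K" "i \<in> J (z i) l" by (auto simp: Du_def)
      have "z i < K" using sf_mem[OF sf p(4)] by auto
      then have "((z i, l), i) \<in> ?S" using p by auto
      then show "p \<in> ?h ` ?S" using p by (auto intro: image_eqI[of _ _ "((z i, l), i)"])
    qed
  qed
  have fin: "\<And>kl. finite (J (fst kl) (snd kl))" using sf_fin[OF sf] by blast
  have "(\<Sum>k<K. \<Sum>l<K. \<Sum>i\<in>J k l. g (i,l)) = (\<Sum>kl\<in>{..<K} \<times> {..<K}. \<Sum>i\<in>J (fst kl) (snd kl). g (i, snd kl))"
    unfolding sum.cartesian_product by (simp add: case_prod_beta)
  also have "\<dots> = (\<Sum>q\<in>?S. g (?h q))"
    by (subst sum.Sigma) (use fin in \<open>auto simp: case_prod_beta\<close>)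
  also have "\<dots> = (\<Sum>p\<in>?h ` ?S. g p)"
    using sum.reindex[OF inj, of g] by (simp add: o_def)
  finally show ?thesis using img by simp
qed

lemma DV_sum:
  assumes sf: "sparsity_family n K z J"
  shows "(\<Sum>p\<in>Dv n K z J. g p) = (\<Sum>k<K. \<Sum>l<K. \<Sum>i\<in>J k l. g (l,i))"
proof -
  have "Dv n K z J = prod.swap ` Du n K z J" by (auto simp: Du_def Dv_def image_iff)
  then have "(\<Sum>p\<in>Dv n K z J. g p) = (\<Sum>p\<in>Du n K z J. g (prod.swap p))"
    by (simp only:) (subst sum.reindex, auto simp: inj_on_def)
  also have "\<dots> = (\<Sum>k<K. \<Sum>l<K. \<Sum>i\<in>J k l. g (l,i))"
    by (subst DU_sum[OF sf]) simp
  finally show ?thesis .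
qed

lemma card_Du: "sparsity_family n K z J \<Longrightarrow> card (Du n K z J) = Jcard K J"
  using DU_sum[of n K z J "\<lambda>_. 1::nat"] by (simp add: Jcard_def)

lemma card_Dv: "sparsity_family n K z J \<Longrightarrow> card (Dv n K z J) = Jcard K J"
  using DV_sum[of n K z J "\<lambda>_. 1::nat"] by (simp add: Jcard_def)

lemma GRP:
  assumes "clustering n K z"
  shows "(\<Sum>j<n. f j) = (\<Sum>l<K. \<Sum>j\<in>comm n z l. f j)"
proof -
  have "(\<Sum>l<K. \<Sum>j | j \<in> {..<n} \<and> z j = l. f j) = sum f {..<n}"
    by (rule sum.group) (use assms in \<open>auto simp: clustering_def\<close>)
  moreover have "\<And>l. {j. j \<in> {..<n} \<and> z j = l} = comm n z l" by (auto simp: comm_def)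
  ultimately show ?thesis by simp
qed

lemma U_le1: "u \<in> Uset n K z J \<Longrightarrow> \<bar>u p\<bar> \<le> 1"
proof -
  assume u: "u \<in> Uset n K z J"
  show ?thesis
  proof (cases "p \<in> Du n K z J")
    case True
    have "(u p)\<^sup>2 \<le> (\<Sum>p\<in>Du n K z J. (u p)\<^sup>2)"
      by (rule member_le_sum[OF True]) (auto simp: Du_fin)
    then have "(u p)\<^sup>2 \<le> 1" using u by (auto simp: Uset_def)
    then show ?thesis by (simp add: abs_square_le_1)
  next
    case False
    have "u p = 0" using u False unfolding Uset_def by blast
    then show ?thesis by simp
  qed
qed

lemma V_le1: assumes sf: "sparsity_family n K z J" and v: "v \<in> Vset n K z J" shows "\<bar>v p\<bar> \<le> 1"
proof (cases "p \<in> Dv n K z J")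
  case True
  obtain k j where p: "p = (k,j)" by (cases p)
  have jm: "j \<in> J (z j) k" using True p Dv_iff[OF sf] by auto
  have kl: "k < K" "z j < K" using sf_mem[OF sf jm] by auto
  have "(v (k,j))\<^sup>2 \<le> (\<Sum>j'\<in>J (z j) k. (v (k,j'))\<^sup>2)"
    by (rule member_le_sum[OF jm, where f="\<lambda>j'. (v (k,j'))\<^sup>2"]) (auto simp: sf_fin[OF sf])
  moreover have "(\<Sum>j'\<in>J (z j) k. (v (k,j'))\<^sup>2) \<le> 1" using v kl unfolding Vset_def by blast
  ultimately have "(v p)\<^sup>2 \<le> 1" using p by simp
  then show ?thesis by (simp add: abs_square_le_1)
next
  case False
  have "v p = 0" using v False unfolding Vset_def by blast
  then show ?thesis by simp
qed

lemma FROB: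
  assumes cl: "clustering n K z" and sf: "sparsity_family n K z J"
    and u: "u \<in> Uset n K z J" and v: "v \<in> Vset n K z J"
  shows "(\<Sum>i<n. \<Sum>j<n. (u (i, z j) * v (z i, j))\<^sup>2) \<le> 1"
proof -
  have row: "(\<Sum>j<n. (u (i, z j) * v (z i, j))\<^sup>2) \<le> (\<Sum>l<K. (u (i,l))\<^sup>2)" if i: "i < n" for i
  proof -
    have ziK: "z i < K" using cl i by (auto simp: clustering_def)
    have "(\<Sum>j<n. (u (i, z j) * v (z i, j))\<^sup>2) = (\<Sum>l<K. \<Sum>j\<in>comm n z l. (u (i, z j) * v (z i, j))\<^sup>2)"
      by (rule GRP[OF cl])
    also have "\<dots> = (\<Sum>l<K. (u (i,l))\<^sup>2 * (\<Sum>j\<in>comm n z l. (v (z i, j))\<^sup>2))"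
      by (intro sum.cong refl) (auto simp: comm_def power_mult_distrib sum_distrib_left)
    also have "\<dots> \<le> (\<Sum>l<K. (u (i,l))\<^sup>2 * 1)"
    proof (intro sum_mono mult_left_mono)
      fix l assume l: "l \<in> {..<K}"
      have "(\<Sum>j\<in>comm n z l. (v (z i, j))\<^sup>2) = (\<Sum>j\<in>J l (z i). (v (z i, j))\<^sup>2)"
      proof (rule sum.mono_neutral_right)
        show "finite (comm n z l)" by (auto simp: comm_def)
        show "J l (z i) \<subseteq> comm n z l" by (rule sf_sub[OF sf])
        show "\<forall>j\<in>comm n z l - J l (z i). (v (z i, j))\<^sup>2 = 0"
        proof
          fix j assume "j \<in> comm n z l - J l (z i)"
          then have "(z i, j) \<notin> Dv n K z J" using Dv_iff[OF sf, of "(z i, j)"] by (auto simp: comm_def)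
          then show "(v (z i, j))\<^sup>2 = 0" using v by (auto simp: Vset_def)
        qed
      qed
      also have "\<dots> \<le> 1" using v l ziK by (auto simp: Vset_def)
      finally show "(\<Sum>j\<in>comm n z l. (v (z i, j))\<^sup>2) \<le> 1" .
    qed auto
    finally show ?thesis by simp
  qed
  have "(\<Sum>i<n. \<Sum>j<n. (u (i, z j) * v (z i, j))\<^sup>2) \<le> (\<Sum>i<n. \<Sum>l<K. (u (i,l))\<^sup>2)"
    by (rule sum_mono) (use row in auto)
  also have "\<dots> = (\<Sum>p\<in>{..<n} \<times> {..<K}. (u p)\<^sup>2)"
    by (simp add: sum.cartesian_product)
  also have "\<dots> = (\<Sum>p\<in>Du n K z J. (u p)\<^sup>2)"
    by (rule sum.mono_neutral_right) (use u Du_sub in \<open>auto simp: Uset_def\<close>)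
  also have "\<dots> \<le> 1" using u by (auto simp: Uset_def)
  finally show ?thesis .
qed

definition tr :: "real \<Rightarrow> int" where "tr r = (if 0 \<le> r then \<lfloor>r\<rfloor> else \<lceil>r\<rceil>)"

lemma tr_bounds: "(0 \<le> r \<longrightarrow> 0 \<le> real_of_int (tr r) \<and> real_of_int (tr r) \<le> r \<and> r < real_of_int (tr r) + 1)
   \<and> (r < 0 \<longrightarrow> r \<le> real_of_int (tr r) \<and> real_of_int (tr r) \<le> 0 \<and> real_of_int (tr r) - 1 < r)"
proof (cases "0 \<le> r")
  case True
  have "0 \<le> \<lfloor>r\<rfloor>" using True by simp
  then show ?thesis using True of_int_floor_le[of r] real_of_int_floor_add_one_gt[of r] by (simp add: tr_def)
next
  case False
  have "\<lceil>r\<rceil> \<le> 0" using False by simp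
  moreover have "real_of_int \<lceil>r\<rceil> - 1 < r" by linarith
  ultimately show ?thesis using False le_of_int_ceiling[of r] by (simp add: tr_def)
qed

lemma tr_abs: "\<bar>real_of_int (tr r)\<bar> \<le> \<bar>r\<bar>"
  using tr_bounds[of r] by linarith

lemma tr_err: "\<bar>r - real_of_int (tr r)\<bar> \<le> 1"
  using tr_bounds[of r] by linarith

lemma sq_le: assumes "\<bar>x\<bar> \<le> (y::real)" shows "x\<^sup>2 \<le> y\<^sup>2"
proof -
  have "\<bar>x\<bar>\<^sup>2 \<le> y\<^sup>2" by (rule power_mono[OF assms]) simp
  then show ?thesis by simp
qed

definition rnd :: "real \<Rightarrow> real \<Rightarrow> real" where "rnd m r = real_of_int (tr (m * r)) / m"

lemma rnd_abs: assumes "m > 0" shows "\<bar>rnd m r\<bar> \<le> \<bar>r\<bar>"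
proof -
  have "\<bar>real_of_int (tr (m * r))\<bar> \<le> m * \<bar>r\<bar>" using tr_abs[of "m*r"] assms by (simp add: abs_mult)
  then show ?thesis using assms by (simp add: rnd_def abs_div pos_divide_le_eq mult.commute)
qed

lemma rnd_err: assumes "m > 0" shows "\<bar>r - rnd m r\<bar> \<le> 1 / m"
proof -
  have "r - rnd m r = (m * r - real_of_int (tr (m * r))) / m" using assms by (simp add: rnd_def field_simps)
  then show ?thesis using tr_err[of "m*r"] assms by (simp add: abs_div divide_right_mono)
qed

definition mu :: "nat \<Rightarrow> nat \<Rightarrow> (nat \<Rightarrow> nat) \<Rightarrow> (nat \<Rightarrow> nat \<Rightarrow> nat set) \<Rightarrow> real" where
  "mu n K z J = 4 * sqrt (real (card (Du n K z J)))"

definition ru :: "nat \<Rightarrow> nat \<Rightarrow> (nat \<Rightarrow> nat) \<Rightarrow> (nat \<Rightarrow> nat \<Rightarrow> nat set) \<Rightarrow> (nat \<times> nat \<Rightarrow> real) \<Rightarrow> nat \<times> nat \<Rightarrow> real" where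
  "ru n K z J u = (\<lambda>p. if p \<in> Du n K z J then rnd (mu n K z J) (u p) else 0)"

definition mv :: "(nat \<Rightarrow> nat \<Rightarrow> nat set) \<Rightarrow> nat \<Rightarrow> nat \<Rightarrow> real" where
  "mv J k l = 4 * sqrt (real (card (J l k)))"

definition rv :: "nat \<Rightarrow> nat \<Rightarrow> (nat \<Rightarrow> nat) \<Rightarrow> (nat \<Rightarrow> nat \<Rightarrow> nat set) \<Rightarrow> (nat \<times> nat \<Rightarrow> real) \<Rightarrow> nat \<times> nat \<Rightarrow> real" where
  "rv n K z J v = (\<lambda>p. if p \<in> Dv n K z J then rnd (mv J (fst p) (z (snd p))) (v p) else 0)"

lemma mu_pos: "p \<in> Du n K z J \<Longrightarrow> mu n K z J > 0"
  using Du_fin[of n K z J] by (auto simp: mu_def card_gt_0_iff)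

lemma mv_pos: "sparsity_family n K z J \<Longrightarrow> p \<in> Dv n K z J \<Longrightarrow> mv J (fst p) (z (snd p)) > 0"
  using Dv_iff[of n K z J p] sf_fin[of n K z J] by (auto simp: mv_def card_gt_0_iff)

lemma zero_U: "(\<lambda>_. 0) \<in> Uset n K z J" by (simp add: Uset_def)
lemma zero_V: "(\<lambda>_. 0) \<in> Vset n K z J" by (simp add: Vset_def)

lemma ru_U: assumes u: "u \<in> Uset n K z J" shows "ru n K z J u \<in> Uset n K z J"
proof -
  have "(\<Sum>p\<in>Du n K z J. (ru n K z J u p)\<^sup>2) \<le> (\<Sum>p\<in>Du n K z J. (u p)\<^sup>2)"
  proof (rule sum_mono)
    fix p assume p: "p \<in> Du n K z J"
    have "\<bar>ru n K z J u p\<bar> \<le> \<bar>u p\<bar>" using rnd_abs[OF mu_pos[OF p]] p by (simp add: ru_def)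
    then show "(ru n K z J u p)\<^sup>2 \<le> (u p)\<^sup>2" by (simp add: abs_le_square_iff)
  qed
  then show ?thesis using u by (auto simp: Uset_def ru_def)
qed

lemma ru_err: assumes u: "u \<in> Uset n K z J" shows "(\<lambda>p. 4 * (u p - ru n K z J u p)) \<in> Uset n K z J"
proof -
  let ?D = "Du n K z J"
  have "(\<Sum>p\<in>?D. (4 * (u p - ru n K z J u p))\<^sup>2) \<le> (\<Sum>p\<in>?D. 1 / real (card ?D))"
  proof (rule sum_mono)
    fix p assume p: "p \<in> ?D"
    have m: "mu n K z J > 0" by (rule mu_pos[OF p])
    have "\<bar>u p - ru n K z J u p\<bar> \<le> 1 / mu n K z J" using rnd_err[OF m] p by (simp add: ru_def)
    then have "\<bar>4 * (u p - ru n K z J u p)\<bar> \<le> 4 / mu n K z J" by (simp add: abs_mult)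
    then have "(4 * (u p - ru n K z J u p))\<^sup>2 \<le> (4 / mu n K z J)\<^sup>2"
      by (rule sq_le)
    also have "(4 / mu n K z J)\<^sup>2 = 1 / real (card ?D)"
      using m by (simp add: mu_def power_divide power_mult_distrib)
    finally show "(4 * (u p - ru n K z J u p))\<^sup>2 \<le> 1 / real (card ?D)" .
  qed
  also have "\<dots> \<le> 1" by simp
  finally show ?thesis using u by (auto simp: Uset_def ru_def)
qed

lemma rv_V: assumes sf: "sparsity_family n K z J" and v: "v \<in> Vset n K z J" shows "rv n K z J v \<in> Vset n K z J"
proof -
  have le: "(rv n K z J v p)\<^sup>2 \<le> (v p)\<^sup>2" for p
  proof (cases "p \<in> Dv n K z J")
    case True
    have "\<bar>rv n K z J v p\<bar> \<le> \<bar>v p\<bar>" using rnd_abs[OF mv_pos[OF sf True]] True by (simp add: rv_def)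
    then show ?thesis by (simp add: abs_le_square_iff)
  qed (simp add: rv_def)
  show ?thesis unfolding Vset_def
  proof (intro CollectI conjI allI impI)
    fix p assume "p \<notin> Dv n K z J" then show "rv n K z J v p = 0" by (simp add: rv_def)
  next
    fix k l assume "k < K" "l < K"
    have "(\<Sum>j\<in>J l k. (rv n K z J v (k,j))\<^sup>2) \<le> (\<Sum>j\<in>J l k. (v (k,j))\<^sup>2)"
      by (rule sum_mono) (rule le)
    also have "\<dots> \<le> 1" using v \<open>k < K\<close> \<open>l < K\<close> unfolding Vset_def by blast
    finally show "(\<Sum>j\<in>J l k. (rv n K z J v (k,j))\<^sup>2) \<le> 1" .
  qed
qed

lemma rv_err: assumes sf: "sparsity_family n K z J" and v: "v \<in> Vset n K z J"
  shows "(\<lambda>p. 4 * (v p - rv n K z J v p)) \<in> Vset n K z J"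
  unfolding Vset_def
proof (intro CollectI conjI allI impI)
  fix p assume "p \<notin> Dv n K z J" then show "4 * (v p - rv n K z J v p) = 0"
    using v by (cases p) (simp add: rv_def Vset_def)
next
  fix k l assume k: "k < K" and l: "l < K"
  have "(\<Sum>j\<in>J l k. (4 * (v (k,j) - rv n K z J v (k,j)))\<^sup>2) \<le> (\<Sum>j\<in>J l k. 1 / real (card (J l k)))"
  proof (rule sum_mono)
    fix j assume j: "j \<in> J l k"
    have zj: "z j = l" using sf_mem[OF sf j] by simp
    have D: "(k,j) \<in> Dv n K z J" using Dv_iff[OF sf, of "(k,j)"] j zj by simp
    have m: "mv J k l > 0" using mv_pos[OF sf D] zj by simp
    have "\<bar>v (k,j) - rv n K z J v (k,j)\<bar> \<le> 1 / mv J k l" using rnd_err[OF m] D zj by (simp add: rv_def)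
    then have "\<bar>4 * (v (k,j) - rv n K z J v (k,j))\<bar> \<le> 4 / mv J k l" by (simp add: abs_mult)
    then have "(4 * (v (k,j) - rv n K z J v (k,j)))\<^sup>2 \<le> (4 / mv J k l)\<^sup>2"
      by (rule sq_le)
    also have "(4 / mv J k l)\<^sup>2 = 1 / real (card (J l k))"
      using m by (simp add: mv_def power_divide power_mult_distrib)
    finally show "(4 * (v (k,j) - rv n K z J v (k,j)))\<^sup>2 \<le> 1 / real (card (J l k))" .
  qed
  also have "\<dots> \<le> 1" by simp
  finally show "(\<Sum>j\<in>J l k. (4 * (v (k,j) - rv n K z J v (k,j)))\<^sup>2) \<le> 1" .
qed

lemma Fb_decomp:
  "Fb n z X u v = Fb n z X a b + Fb n z X (\<lambda>p. 4 * (u p - a p)) v / 4 + Fb n z X a (\<lambda>p. 4 * (v p - b p)) / 4"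
proof -
  have "Fb n z X a b + Fb n z X (\<lambda>p. 4 * (u p - a p)) v / 4 + Fb n z X a (\<lambda>p. 4 * (v p - b p)) / 4
     = (\<Sum>i<n. \<Sum>j<n. a (i, z j) * b (z i, j) * X i j + 4 * (u (i, z j) - a (i, z j)) * v (z i, j) * X i j / 4
          + a (i, z j) * (4 * (v (z i, j) - b (z i, j))) * X i j / 4)"
    by (simp add: Fb_def sum.distrib sum_divide_distrib)
  also have "\<dots> = Fb n z X u v" unfolding Fb_def
    by (intro sum.cong refl) (simp add: field_simps)
  finally show ?thesis by simp
qed

lemma Fb_zero: "Fb n z X (\<lambda>_. 0) v = 0" by (simp add: Fb_def)

lemma Fb_bound:
  assumes sf: "sparsity_family n K z J" and X: "\<forall>i j. \<bar>X i j\<bar> \<le> 1"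
    and u: "u \<in> Uset n K z J" and v: "v \<in> Vset n K z J"
  shows "Fb n z X u v \<le> real n * real n"
proof -
  have "Fb n z X u v \<le> (\<Sum>i<n. \<Sum>j<n. (1::real))"
    unfolding Fb_def
  proof (intro sum_mono)
    fix i j
    have "\<bar>u (i, z j) * v (z i, j) * X i j\<bar> \<le> 1"
      unfolding abs_mult using U_le1[OF u] V_le1[OF sf v] X
      by (intro mult_le_one) auto
    then show "u (i, z j) * v (z i, j) * X i j \<le> 1" by linarith
  qed
  then show ?thesis by simp
qed

lemma NET:
  assumes sf: "sparsity_family n K z J" and X: "\<forall>i j. \<bar>X i j\<bar> \<le> 1"
    and R: "\<forall>u\<in>Uset n K z J. \<forall>v\<in>Vset n K z J. Fb n z X (ru n K z J u) (rv n K z J v) \<le> R"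
    and u: "u \<in> Uset n K z J" and v: "v \<in> Vset n K z J"
  shows "Fb n z X u v \<le> 2 * R"
proof -
  let ?U = "Uset n K z J" and ?V = "Vset n K z J"
  let ?S = "{Fb n z X u v | u v. u \<in> ?U \<and> v \<in> ?V}"
  have "Fb n z X (\<lambda>_. 0) (\<lambda>_. 0) \<in> ?S" using zero_U zero_V by blast
  then have ne: "?S \<noteq> {}" by blast
  have bdd: "bdd_above ?S" unfolding bdd_above_def
  proof (intro exI[of _ "real n * real n"] ballI)
    fix x assume "x \<in> ?S"
    then obtain u' v' where x: "x = Fb n z X u' v'" and uv: "u' \<in> ?U" "v' \<in> ?V" by blast
    show "x \<le> real n * real n" unfolding x by (rule Fb_bound[OF sf X uv])
  qed
  have mem: "Fb n z X u' v' \<le> Sup ?S" if "u' \<in> ?U" "v' \<in> ?V" for u' v'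
  proof (rule cSup_upper[OF _ bdd])
    show "Fb n z X u' v' \<in> ?S" using that by blast
  qed
  have step: "Fb n z X u' v' \<le> R + Sup ?S / 4 + Sup ?S / 4" if u': "u' \<in> ?U" and v': "v' \<in> ?V" for u' v'
  proof -
    let ?a = "ru n K z J u'" and ?b = "rv n K z J v'"
    have "Fb n z X u' v' = Fb n z X ?a ?b + Fb n z X (\<lambda>p. 4 * (u' p - ?a p)) v' / 4
        + Fb n z X ?a (\<lambda>p. 4 * (v' p - ?b p)) / 4" by (rule Fb_decomp)
    also have "\<dots> \<le> R + Sup ?S / 4 + Sup ?S / 4"
    proof -
      have "Fb n z X ?a ?b \<le> R" using R u' v' by blast
      moreover have "Fb n z X (\<lambda>p. 4 * (u' p - ?a p)) v' \<le> Sup ?S" by (rule mem[OF ru_err[OF u'] v'])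
      moreover have "Fb n z X ?a (\<lambda>p. 4 * (v' p - ?b p)) \<le> Sup ?S" by (rule mem[OF ru_U[OF u'] rv_err[OF sf v']])
      ultimately show ?thesis by linarith
    qed
    finally show ?thesis .
  qed
  have "Sup ?S \<le> R + Sup ?S / 4 + Sup ?S / 4"
  proof (rule cSup_least[OF ne])
    fix x assume "x \<in> ?S"
    then obtain u' v' where "x = Fb n z X u' v'" "u' \<in> ?U" "v' \<in> ?V" by blast
    then show "x \<le> R + Sup ?S / 4 + Sup ?S / 4" using step by simp
  qed
  then have "Sup ?S \<le> 2 * R" by linarith
  then show ?thesis using mem[OF u v] by linarith
qed

lemma TEST:
  assumes cl: "clustering n K z" and sf: "sparsity_family n K z J"
    and T: "\<forall>u\<in>Uset n K z J. \<forall>v\<in>Vset n K z J. Fb n z X u v \<le> T"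
  shows "proj_op_sum n z J K X \<le> T\<^sup>2"
proof -
  have T0: "0 \<le> T" using T zero_U[of n K z J] zero_V[of n K z J] Fb_zero[of n z X] by fastforce
  define a where "a k l = op_norm (comm n z k) (comm n z l) (proj_block J k l X)" for k l
  have a0: "0 \<le> a k l" for k l unfolding a_def by (rule op_norm_nonneg)
  have main: "(\<Sum>k<K. \<Sum>l<K. (a k l)\<^sup>2) \<le> T\<^sup>2 + 2 * \<delta> * (\<Sum>k<K. \<Sum>l<K. a k l)" if \<delta>: "\<delta> > 0" for \<delta>
  proof -
    define Q where "Q k l x \<longleftrightarrow> (\<Sum>j\<in>comm n z l. (x j)\<^sup>2) \<le> 1 \<and>
        a k l - \<delta> < sqrt (\<Sum>i\<in>comm n z k. (\<Sum>j\<in>comm n z l. proj_block J k l X i j * x j)\<^sup>2)" for k l x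
    have ex: "\<exists>x. Q k l x" for k l unfolding Q_def a_def by (rule op_norm_approx[OF \<delta>])
    define x where "x k l = (SOME x. Q k l x)" for k l
    have xQ: "Q k l (x k l)" for k l unfolding x_def by (rule someI_ex[OF ex])
    define yv where "yv k l i = (\<Sum>j\<in>comm n z l. proj_block J k l X i j * x k l j)" for k l i
    define N2 where "N2 k l = (\<Sum>i\<in>comm n z k. (yv k l i)\<^sup>2)" for k l
    have N20: "0 \<le> N2 k l" for k l unfolding N2_def by (rule sum_nonneg) simp
    have aN: "(a k l)\<^sup>2 - 2 * \<delta> * a k l \<le> N2 k l" for k l
    proof (cases "a k l \<le> \<delta>")
      case True
      have "a k l * (a k l - 2 * \<delta>) \<le> 0" using a0[of k l] True \<delta> by (intro mult_nonneg_nonpos) auto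
      then have "(a k l)\<^sup>2 - 2 * \<delta> * a k l \<le> 0" by (simp add: power2_eq_square algebra_simps)
      then show ?thesis using N20[of k l] by linarith
    next
      case False
      have lt: "a k l - \<delta> < sqrt (N2 k l)" using xQ[of k l] unfolding Q_def N2_def yv_def by blast
      have "(a k l - \<delta>)\<^sup>2 < (sqrt (N2 k l))\<^sup>2" using False lt by (intro power_strict_mono) auto
      then have "(a k l - \<delta>)\<^sup>2 < N2 k l" using N20[of k l] by simp
      moreover have "(a k l)\<^sup>2 - 2 * \<delta> * a k l \<le> (a k l - \<delta>)\<^sup>2" by (simp add: power2_eq_square algebra_simps)
      ultimately show ?thesis by linarith
    qed
    define v where "v p = (if p \<in> Dv n K z J then x (fst p) (z (snd p)) (snd p) else 0)" for p
    have vV: "v \<in> Vset n K z J" unfolding Vset_def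
    proof (intro CollectI conjI allI impI)
      fix p assume "p \<notin> Dv n K z J" then show "v p = 0" by (simp add: v_def)
    next
      fix k l assume k: "k < K" and l: "l < K"
      have "(\<Sum>j\<in>J l k. (v (k,j))\<^sup>2) = (\<Sum>j\<in>J l k. (x k l j)\<^sup>2)"
      proof (rule sum.cong[OF refl])
        fix j assume j: "j \<in> J l k"
        have zj: "z j = l" using sf_mem[OF sf j] by simp
        have "(k,j) \<in> Dv n K z J" using Dv_iff[OF sf, of "(k,j)"] j zj by simp
        then show "(v (k,j))\<^sup>2 = (x k l j)\<^sup>2" using zj by (simp add: v_def)
      qed
      also have "\<dots> \<le> (\<Sum>j\<in>comm n z l. (x k l j)\<^sup>2)"
        by (rule sum_mono2) (use sf_sub[OF sf, of l k] in \<open>auto simp: comm_def\<close>)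
      also have "\<dots> \<le> 1" using xQ[of k l] unfolding Q_def by blast
      finally show "(\<Sum>j\<in>J l k. (v (k,j))\<^sup>2) \<le> 1" .
    qed
    define G where "G p = (\<Sum>j\<in>comm n z (snd p). X (fst p) j * v (z (fst p), j))" for p
    have yvG: "yv k l i = (if i \<in> J k l then G (i,l) else 0)" if i: "i \<in> comm n z k" for k l i
    proof (cases "i \<in> J k l")
      case True
      have zi: "z i = k" using sf_mem[OF sf True] by simp
      have "yv k l i = G (i,l)" unfolding yv_def G_def
      proof (rule sum.cong)
        fix j assume j: "j \<in> comm n z (snd (i,l))"
        then have zj: "z j = l" and jn: "j < n" by (auto simp: comm_def)
        have "(z i, j) \<in> Dv n K z J \<longleftrightarrow> j \<in> J l k" using Dv_iff[OF sf, of "(z i, j)"] zi zj by simp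
        then show "proj_block J k l X i j * x k l j = X (fst (i,l)) j * v (z (fst (i,l)), j)"
          using True zi zj by (auto simp: proj_block_def v_def)
      qed simp
      then show ?thesis using True by simp
    next
      case False
      then show ?thesis by (simp add: yv_def proj_block_def)
    qed
    have N2G: "N2 k l = (\<Sum>i\<in>J k l. (G (i,l))\<^sup>2)" if "k < K" "l < K" for k l
      unfolding N2_def
    proof (rule sum.mono_neutral_cong_right)
      show "finite (comm n z k)" by (auto simp: comm_def)
      show "J k l \<subseteq> comm n z k" by (rule sf_sub[OF sf])
      show "\<forall>i\<in>comm n z k - J k l. (yv k l i)\<^sup>2 = 0" using yvG by auto
      fix i assume i: "i \<in> J k l"
      then have "i \<in> comm n z k" using sf_sub[OF sf, of k l] by blast
      then show "(yv k l i)\<^sup>2 = (G (i,l))\<^sup>2" using yvG[of i k l] i by simp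
    qed
    define Vs where "Vs = (\<Sum>k<K. \<Sum>l<K. N2 k l)"
    have VsG: "Vs = (\<Sum>p\<in>Du n K z J. (G p)\<^sup>2)"
      unfolding Vs_def DU_sum[OF sf] by (intro sum.cong refl) (simp add: N2G)
    have Vs0: "0 \<le> Vs" unfolding Vs_def by (intro sum_nonneg N20)
    have VsT: "Vs \<le> T\<^sup>2"
    proof (cases "Vs = 0")
      case True then show ?thesis by simp
    next
      case False
      then have Vpos: "Vs > 0" using Vs0 by simp
      define u where "u p = (if p \<in> Du n K z J then G p / sqrt Vs else 0)" for p
      have uU: "u \<in> Uset n K z J" unfolding Uset_def
      proof (intro CollectI conjI allI impI)
        fix p assume "p \<notin> Du n K z J" then show "u p = 0" by (simp add: u_def)
      next
        have "(\<Sum>p\<in>Du n K z J. (u p)\<^sup>2) = (\<Sum>p\<in>Du n K z J. (G p)\<^sup>2 / Vs)"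
          using Vpos by (intro sum.cong refl) (simp add: u_def power_divide)
        also have "\<dots> = 1" using Vpos by (simp add: VsG[symmetric] sum_divide_distrib[symmetric])
        finally show "(\<Sum>p\<in>Du n K z J. (u p)\<^sup>2) \<le> 1" by simp
      qed
      have row: "(\<Sum>j<n. u (i, z j) * v (z i, j) * X i j) = (\<Sum>l<K. u (i,l) * G (i,l))" for i
      proof -
        have "(\<Sum>j<n. u (i, z j) * v (z i, j) * X i j) = (\<Sum>l<K. \<Sum>j\<in>comm n z l. u (i, z j) * v (z i, j) * X i j)"
          by (rule GRP[OF cl])
        also have "\<dots> = (\<Sum>l<K. u (i,l) * G (i,l))"
          unfolding G_def
          by (intro sum.cong refl) (auto simp: sum_distrib_left comm_def algebra_simps intro!: sum.cong)
        finally show ?thesis .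
      qed
      have "Fb n z X u v = (\<Sum>i<n. \<Sum>l<K. u (i,l) * G (i,l))"
        unfolding Fb_def using row by simp
      also have "\<dots> = (\<Sum>p\<in>{..<n} \<times> {..<K}. u p * G p)"
        by (simp add: sum.cartesian_product case_prod_beta)
      also have "\<dots> = (\<Sum>p\<in>Du n K z J. u p * G p)"
        by (rule sum.mono_neutral_right) (use Du_sub in \<open>auto simp: u_def\<close>)
      also have "\<dots> = (\<Sum>p\<in>Du n K z J. (G p)\<^sup>2) / sqrt Vs"
        by (simp add: u_def sum_divide_distrib power2_eq_square)
      also have "\<dots> = sqrt Vs" using Vs0 by (simp add: VsG[symmetric] real_div_sqrt)
      finally have "sqrt Vs \<le> T" using T uU vV by metis
      then have "(sqrt Vs)\<^sup>2 \<le> T\<^sup>2" using Vs0 by (intro power_mono) auto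
      then show ?thesis using Vs0 by simp
    qed
    have "(\<Sum>k<K. \<Sum>l<K. (a k l)\<^sup>2 - 2 * \<delta> * a k l) \<le> Vs"
      unfolding Vs_def by (intro sum_mono aN)
    moreover have "(\<Sum>k<K. \<Sum>l<K. (a k l)\<^sup>2 - 2 * \<delta> * a k l) =
        (\<Sum>k<K. \<Sum>l<K. (a k l)\<^sup>2) - 2 * \<delta> * (\<Sum>k<K. \<Sum>l<K. a k l)"
      by (simp add: sum_subtractf sum_distrib_left)
    ultimately show ?thesis using VsT by linarith
  qed
  define B where "B = (\<Sum>k<K. \<Sum>l<K. a k l)"
  have B0: "0 \<le> B" unfolding B_def by (intro sum_nonneg a0)
  have "(\<Sum>k<K. \<Sum>l<K. (a k l)\<^sup>2) \<le> T\<^sup>2"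
  proof (rule field_le_epsilon)
    fix e :: real assume e: "0 < e"
    define \<delta> where "\<delta> = e / (2 * B + 1)"
    have d: "\<delta> > 0" using e B0 by (simp add: \<delta>_def)
    have "2 * \<delta> * B \<le> e"
    proof -
      have "2 * B \<le> 2 * B + 1" by simp
      then have "2 * B * e \<le> (2 * B + 1) * e" using e by (intro mult_right_mono) auto
      then show ?thesis using B0 by (simp add: \<delta>_def field_simps)
    qed
    then show "(\<Sum>k<K. \<Sum>l<K. (a k l)\<^sup>2) \<le> T\<^sup>2 + e" using main[OF d] unfolding B_def by linarith
  qed
  then show ?thesis unfolding proj_op_sum_def a_def .
qed

lemma sym_geo: "(\<Sum>a\<in>{-int L..int L}. (1/2::real) ^ nat \<bar>a\<bar>) = 3 - 2 * (1/2) ^ L"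
proof (induction L)
  case 0
  then show ?case by simp
next
  case (Suc L)
  have eq: "{-int (Suc L)..int (Suc L)} = insert (-int (Suc L)) (insert (int (Suc L)) {-int L..int L})"
    by auto
  have h: "nat (int L + 1) = Suc L" "nat (1 + int L) = Suc L" by auto
  have "(\<Sum>a\<in>{-int (Suc L)..int (Suc L)}. (1/2::real) ^ nat \<bar>a\<bar>) =
      (1/2) ^ Suc L + ((1/2) ^ Suc L + (\<Sum>a\<in>{-int L..int L}. (1/2::real) ^ nat \<bar>a\<bar>))"
    unfolding eq by (subst sum.insert; simp add: h)+
  also have "\<dots> = 3 - 2 * (1/2) ^ Suc L" using Suc by simp
  finally show ?case .
qed

lemma grid_card:
  fixes D :: "'a set" and L :: nat
  assumes fin: "finite D"
  shows "real (card {g \<in> PiE D (\<lambda>_. {-int L..int L}). (\<Sum>p\<in>D. \<bar>g p\<bar>) \<le> int L}) \<le> 2 ^ L * 3 ^ card D"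
proof -
  let ?P = "PiE D (\<lambda>_. {-int L..int L})"
  let ?G = "{g \<in> ?P. (\<Sum>p\<in>D. \<bar>g p\<bar>) \<le> int L}"
  define wt where "wt g = (\<Prod>p\<in>D. (1/2::real) ^ nat \<bar>g p\<bar>)" for g :: "'a \<Rightarrow> int"
  have finP: "finite ?P" using fin by (intro finite_PiE) auto
  have wt_ge: "1 \<le> 2 ^ L * wt g" if g: "g \<in> ?G" for g
  proof -
    have "wt g = (1/2::real) ^ (\<Sum>p\<in>D. nat \<bar>g p\<bar>)" unfolding wt_def by (simp add: power_sum)
    moreover have "(\<Sum>p\<in>D. nat \<bar>g p\<bar>) \<le> L"
    proof -
      have e: "int (\<Sum>p\<in>D. nat \<bar>g p\<bar>) = (\<Sum>p\<in>D. \<bar>g p\<bar>)" by simp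
      have "(\<Sum>p\<in>D. \<bar>g p\<bar>) \<le> int L" using g by simp
      then have "int (\<Sum>p\<in>D. nat \<bar>g p\<bar>) \<le> int L" unfolding e .
      then show ?thesis by (simp only: of_nat_le_iff)
    qed
    ultimately have "wt g \<ge> (1/2::real) ^ L" by (simp add: power_decreasing)
    then have "2 ^ L * wt g \<ge> 2 ^ L * (1/2::real) ^ L" by simp
    then show ?thesis by (simp add: power_one_over[symmetric] power_mult_distrib[symmetric])
  qed
  have "real (card ?G) = (\<Sum>g\<in>?G. 1::real)" by simp
  also have "\<dots> \<le> (\<Sum>g\<in>?G. 2 ^ L * wt g)" by (rule sum_mono) (rule wt_ge)
  also have "\<dots> \<le> (\<Sum>g\<in>?P. 2 ^ L * wt g)"
    by (rule sum_mono2[OF finP]) (auto simp: wt_def intro!: prod_nonneg mult_nonneg_nonneg)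
  also have "\<dots> = 2 ^ L * (\<Sum>g\<in>?P. \<Prod>p\<in>D. (1/2::real) ^ nat \<bar>g p\<bar>)"
    by (simp add: wt_def sum_distrib_left)
  also have "(\<Sum>g\<in>?P. \<Prod>p\<in>D. (1/2::real) ^ nat \<bar>g p\<bar>) = (\<Prod>p\<in>D. \<Sum>a\<in>{-int L..int L}. (1/2::real) ^ nat \<bar>a\<bar>)"
    by (rule prod_sum_PiE[OF fin, symmetric]) simp
  also have "2 ^ L * (\<Prod>p\<in>D. \<Sum>a\<in>{-int L..int L}. (1/2::real) ^ nat \<bar>a\<bar>) \<le> 2 ^ L * (\<Prod>p\<in>D. (3::real))"
    unfolding sym_geo using power_le_one[of "1/2::real" L] by (intro mult_left_mono prod_mono) auto
  finally show ?thesis by simp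
qed

lemma l1_bound:
  fixes f :: "'a \<Rightarrow> real"
  assumes "finite A"
  shows "(\<Sum>p\<in>A. \<bar>f p\<bar>) \<le> sqrt (real (card A)) * sqrt (\<Sum>p\<in>A. (f p)\<^sup>2)"
proof -
  have "(\<Sum>p\<in>A. \<bar>f p\<bar>)\<^sup>2 \<le> (\<Sum>p\<in>A. \<bar>f p\<bar>\<^sup>2) * card A" by (rule sum_squared_le_sum_of_squares)
  then have "(\<Sum>p\<in>A. \<bar>f p\<bar>)\<^sup>2 \<le> (sqrt (real (card A)) * sqrt (\<Sum>p\<in>A. (f p)\<^sup>2))\<^sup>2"
    by (simp add: power_mult_distrib sum_nonneg mult.commute)
  then show ?thesis
    by (rule power2_le_imp_le) (simp add: sum_nonneg)
qed

definition gridset :: "'a set \<Rightarrow> nat \<Rightarrow> ('a \<Rightarrow> int) set" where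
  "gridset D L = {g \<in> PiE D (\<lambda>_. {-int L..int L}). (\<Sum>p\<in>D. \<bar>g p\<bar>) \<le> int L}"

lemma gridset_fin: "finite D \<Longrightarrow> finite (gridset D L)"
  unfolding gridset_def by (rule finite_subset[of _ "PiE D (\<lambda>_. {-int L..int L})"]) (auto intro: finite_PiE)

lemma in_gridset:
  assumes fin: "finite D" and le: "(\<Sum>p\<in>D. \<bar>real_of_int (g p)\<bar>) \<le> real L"
  shows "restrict g D \<in> gridset D L"
proof -
  have s: "(\<Sum>p\<in>D. \<bar>g p\<bar>) \<le> int L"
  proof -
    have "real_of_int (\<Sum>p\<in>D. \<bar>g p\<bar>) \<le> real L" using le by simp
    then show ?thesis by linarith
  qed
  have "\<bar>g p\<bar> \<le> int L" if "p \<in> D" for p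
  proof -
    have "\<bar>g p\<bar> \<le> (\<Sum>p\<in>D. \<bar>g p\<bar>)" by (rule member_le_sum[OF that _ fin]) simp
    then show ?thesis using s by simp
  qed
  then have "g p \<in> {-int L..int L}" if "p \<in> D" for p using that unfolding atLeastAtMost_iff by fastforce
  then have "restrict g D \<in> PiE D (\<lambda>_. {-int L..int L})" by auto
  moreover have "(\<Sum>p\<in>D. \<bar>restrict g D p\<bar>) \<le> int L" using s by simp
  ultimately show ?thesis unfolding gridset_def by blast
qed

lemma Nu_card:
  assumes sf: "sparsity_family n K z J"
  shows "finite (ru n K z J ` Uset n K z J) \<and> real (card (ru n K z J ` Uset n K z J)) \<le> 48 ^ Jcard K J"
proof -
  let ?D = "Du n K z J" and ?s = "Jcard K J"
  let ?m = "mu n K z J"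
  let ?phi = "\<lambda>g p. if p \<in> ?D then real_of_int (g p) / ?m else 0"
  have cD: "card ?D = ?s" by (rule card_Du[OF sf])
  have sub: "ru n K z J ` Uset n K z J \<subseteq> ?phi ` gridset ?D (4 * ?s)"
  proof
    fix w assume "w \<in> ru n K z J ` Uset n K z J"
    then obtain u where u: "u \<in> Uset n K z J" and w: "w = ru n K z J u" by blast
    define g where "g p = tr (?m * u p)" for p
    have "(\<Sum>p\<in>?D. \<bar>real_of_int (g p)\<bar>) \<le> (\<Sum>p\<in>?D. ?m * \<bar>u p\<bar>)"
    proof (rule sum_mono)
      fix p assume "p \<in> ?D"
      have "\<bar>real_of_int (g p)\<bar> \<le> \<bar>?m * u p\<bar>" unfolding g_def by (rule tr_abs)
      then show "\<bar>real_of_int (g p)\<bar> \<le> ?m * \<bar>u p\<bar>" by (simp add: abs_mult mu_def)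
    qed
    also have "\<dots> = ?m * (\<Sum>p\<in>?D. \<bar>u p\<bar>)" by (simp add: sum_distrib_left)
    also have "\<dots> \<le> ?m * (sqrt (real (card ?D)) * sqrt (\<Sum>p\<in>?D. (u p)\<^sup>2))"
      by (intro mult_left_mono l1_bound Du_fin) (simp add: mu_def)
    also have "\<dots> \<le> ?m * (sqrt (real (card ?D)) * 1)"
      using u by (intro mult_left_mono) (auto simp: Uset_def mu_def)
    also have "\<dots> = real (4 * ?s)" by (simp add: mu_def cD)
    finally have "restrict g ?D \<in> gridset ?D (4 * ?s)" by (intro in_gridset Du_fin)
    moreover have "w = ?phi (restrict g ?D)"
      unfolding w by (auto simp: ru_def rnd_def g_def)
    ultimately show "w \<in> ?phi ` gridset ?D (4 * ?s)" by blast
  qed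
  have fin: "finite (?phi ` gridset ?D (4 * ?s))" by (intro finite_imageI gridset_fin Du_fin)
  have "real (card (ru n K z J ` Uset n K z J)) \<le> real (card (?phi ` gridset ?D (4 * ?s)))"
    using card_mono[OF fin sub] by simp
  also have "\<dots> \<le> real (card (gridset ?D (4 * ?s)))" using card_image_le[OF gridset_fin[OF Du_fin]] by simp
  also have "\<dots> \<le> 2 ^ (4 * ?s) * 3 ^ card ?D" unfolding gridset_def by (rule grid_card[OF Du_fin])
  also have "\<dots> = 48 ^ ?s" by (simp add: cD power_mult power_mult_distrib[symmetric])
  finally show ?thesis using finite_subset[OF sub fin] by simp
qed

lemma Nv_card:
  assumes sf: "sparsity_family n K z J"
  shows "finite (rv n K z J ` Vset n K z J) \<and> real (card (rv n K z J ` Vset n K z J)) \<le> 48 ^ Jcard K J"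
proof -
  let ?D = "Dv n K z J" and ?s = "Jcard K J"
  let ?m = "\<lambda>p. mv J (fst p) (z (snd p))"
  let ?phi = "\<lambda>g p. if p \<in> ?D then real_of_int (g p) / ?m p else 0"
  have cD: "card ?D = ?s" by (rule card_Dv[OF sf])
  have sub: "rv n K z J ` Vset n K z J \<subseteq> ?phi ` gridset ?D (4 * ?s)"
  proof
    fix w assume "w \<in> rv n K z J ` Vset n K z J"
    then obtain v where v: "v \<in> Vset n K z J" and w: "w = rv n K z J v" by blast
    define g where "g p = tr (?m p * v p)" for p
    have "(\<Sum>p\<in>?D. \<bar>real_of_int (g p)\<bar>) \<le> (\<Sum>p\<in>?D. ?m p * \<bar>v p\<bar>)"
    proof (rule sum_mono)
      fix p assume "p \<in> ?D"
      have "\<bar>real_of_int (g p)\<bar> \<le> \<bar>?m p * v p\<bar>" unfolding g_def by (rule tr_abs)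
      then show "\<bar>real_of_int (g p)\<bar> \<le> ?m p * \<bar>v p\<bar>" by (simp add: abs_mult mv_def)
    qed
    also have "\<dots> = (\<Sum>k<K. \<Sum>l<K. \<Sum>i\<in>J k l. ?m (l,i) * \<bar>v (l,i)\<bar>)"
      by (rule DV_sum[OF sf])
    also have "\<dots> \<le> (\<Sum>k<K. \<Sum>l<K. 4 * real (card (J k l)))"
    proof (intro sum_mono)
      fix k l assume k: "k \<in> {..<K}" and l: "l \<in> {..<K}"
      have "(\<Sum>i\<in>J k l. ?m (l,i) * \<bar>v (l,i)\<bar>) = (\<Sum>i\<in>J k l. 4 * sqrt (real (card (J k l))) * \<bar>v (l,i)\<bar>)"
      proof (rule sum.cong[OF refl])
        fix i assume "i \<in> J k l"
        then have "z i = k" using sf_mem[OF sf] by blast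
        then show "?m (l,i) * \<bar>v (l,i)\<bar> = 4 * sqrt (real (card (J k l))) * \<bar>v (l,i)\<bar>" by (simp add: mv_def)
      qed
      also have "\<dots> = 4 * sqrt (real (card (J k l))) * (\<Sum>i\<in>J k l. \<bar>v (l,i)\<bar>)"
        by (simp add: sum_distrib_left mult.assoc)
      also have "\<dots> \<le> 4 * sqrt (real (card (J k l))) * (sqrt (real (card (J k l))) * sqrt (\<Sum>i\<in>J k l. (v (l,i))\<^sup>2))"
        by (intro mult_left_mono l1_bound sf_fin[OF sf]) simp
      also have "\<dots> \<le> 4 * sqrt (real (card (J k l))) * (sqrt (real (card (J k l))) * 1)"
      proof -
        have "(\<Sum>i\<in>J k l. (v (l,i))\<^sup>2) \<le> 1" using v k l unfolding Vset_def by blast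
        then show ?thesis by (intro mult_left_mono) auto
      qed
      also have "\<dots> = 4 * real (card (J k l))" by simp
      finally show "(\<Sum>i\<in>J k l. ?m (l,i) * \<bar>v (l,i)\<bar>) \<le> 4 * real (card (J k l))" .
    qed
    also have "\<dots> = real (4 * ?s)" by (simp add: Jcard_def sum_distrib_left)
    finally have "restrict g ?D \<in> gridset ?D (4 * ?s)" by (intro in_gridset Dv_fin)
    moreover have "w = ?phi (restrict g ?D)"
      unfolding w by (auto simp: rv_def rnd_def g_def)
    ultimately show "w \<in> ?phi ` gridset ?D (4 * ?s)" by blast
  qed
  have fin: "finite (?phi ` gridset ?D (4 * ?s))" by (intro finite_imageI gridset_fin Dv_fin)
  have "real (card (rv n K z J ` Vset n K z J)) \<le> real (card (?phi ` gridset ?D (4 * ?s)))"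
    using card_mono[OF fin sub] by simp
  also have "\<dots> \<le> real (card (gridset ?D (4 * ?s)))" using card_image_le[OF gridset_fin[OF Dv_fin]] by simp
  also have "\<dots> \<le> 2 ^ (4 * ?s) * 3 ^ card ?D" unfolding gridset_def by (rule grid_card[OF Dv_fin])
  also have "\<dots> = 48 ^ ?s" by (simp add: cD power_mult power_mult_distrib[symmetric])
  finally show ?thesis using finite_subset[OF sub fin] by simp
qed

lemma CL:
  assumes P: "\<forall>i j. 0 \<le> P i j \<and> P i j \<le> 1 \<and> P i j = P j i"
    and cl: "clustering n K z" and sf: "sparsity_family n K z J" and tau: "\<tau> > 0"
  shows "measure_pmf.prob (adj_pmf n P) {A. proj_op_sum n z J K (\<lambda>i j. of_bool (A i j) - P i j) > \<tau>}
     \<le> 48 ^ (2 * Jcard K J) * exp (- \<tau> / 4)"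
proof -
  let ?U = "Uset n K z J" and ?V = "Vset n K z J"
  let ?Nu = "ru n K z J ` ?U" and ?Nv = "rv n K z J ` ?V"
  let ?X = "\<lambda>A i j. of_bool (A i j) - P i j"
  define R where "R = sqrt \<tau> / 2"
  have R0: "R > 0" using tau by (simp add: R_def)
  have RR: "R\<^sup>2 = \<tau> / 4" using tau by (simp add: R_def power_divide)
  have Xb: "\<forall>i j. \<bar>?X A i j\<bar> \<le> 1" for A using P by (auto simp: of_bool_def)
  have sub: "{A. proj_op_sum n z J K (?X A) > \<tau>} \<subseteq> (\<Union>ab\<in>?Nu \<times> ?Nv. {A. Fb n z (?X A) (fst ab) (snd ab) \<ge> R})"
  proof
    fix A assume A: "A \<in> {A. proj_op_sum n z J K (?X A) > \<tau>}"
    show "A \<in> (\<Union>ab\<in>?Nu \<times> ?Nv. {A. Fb n z (?X A) (fst ab) (snd ab) \<ge> R})"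
    proof (rule ccontr)
      assume "A \<notin> (\<Union>ab\<in>?Nu \<times> ?Nv. {A. Fb n z (?X A) (fst ab) (snd ab) \<ge> R})"
      then have lt: "\<forall>a\<in>?Nu. \<forall>b\<in>?Nv. Fb n z (?X A) a b < R" by force
      have "\<forall>u\<in>?U. \<forall>v\<in>?V. Fb n z (?X A) (ru n K z J u) (rv n K z J v) \<le> R"
        using lt by (meson image_eqI less_imp_le)
      then have "\<forall>u\<in>?U. \<forall>v\<in>?V. Fb n z (?X A) u v \<le> 2 * R"
        using NET[OF sf Xb] by blast
      then have "proj_op_sum n z J K (?X A) \<le> (2 * R)\<^sup>2" by (rule TEST[OF cl sf])
      also have "(2 * R)\<^sup>2 = \<tau>" using tau by (simp add: R_def power_mult_distrib)
      finally show False using A by simp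
    qed
  qed
  have finN: "finite (?Nu \<times> ?Nv)" using Nu_card[OF sf] Nv_card[OF sf] by simp
  have each: "measure_pmf.prob (adj_pmf n P) {A. Fb n z (?X A) (fst ab) (snd ab) \<ge> R} \<le> exp (- (\<tau> / 4))"
    if ab: "ab \<in> ?Nu \<times> ?Nv" for ab
  proof -
    obtain u v where uv: "u \<in> ?U" "v \<in> ?V" "fst ab = ru n K z J u" "snd ab = rv n K z J v" using ab by auto
    have aU: "fst ab \<in> ?U" using ru_U[OF uv(1)] uv(3) by simp
    have bV: "snd ab \<in> ?V" using rv_V[OF sf uv(2)] uv(4) by simp
    define w where "w i j = fst ab (i, z j) * snd ab (z i, j)" for i j
    have w1: "(\<Sum>i<n. \<Sum>j<n. (w i j)\<^sup>2) \<le> 1" unfolding w_def by (rule FROB[OF cl sf aU bV])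
    have "{A. Fb n z (?X A) (fst ab) (snd ab) \<ge> R} = {A. (\<Sum>i<n. \<Sum>j<n. w i j * (of_bool (A i j) - P i j)) \<ge> R}"
      by (simp add: Fb_def w_def)
    then show ?thesis using hoeff_adj[OF P w1 R0] RR by simp
  qed
  have "measure_pmf.prob (adj_pmf n P) {A. proj_op_sum n z J K (?X A) > \<tau>}
      \<le> measure_pmf.prob (adj_pmf n P) (\<Union>ab\<in>?Nu \<times> ?Nv. {A. Fb n z (?X A) (fst ab) (snd ab) \<ge> R})"
    by (rule measure_pmf.finite_measure_mono[OF sub]) simp
  also have "\<dots> \<le> (\<Sum>ab\<in>?Nu \<times> ?Nv. measure_pmf.prob (adj_pmf n P) {A. Fb n z (?X A) (fst ab) (snd ab) \<ge> R})"
    by (rule measure_pmf.finite_measure_subadditive_finite[OF finN]) simp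
  also have "\<dots> \<le> (\<Sum>ab\<in>?Nu \<times> ?Nv. exp (- (\<tau> / 4)))" by (rule sum_mono) (rule each)
  also have "\<dots> = real (card ?Nu) * real (card ?Nv) * exp (- (\<tau> / 4))" by (simp add: card_cartesian_product)
  also have "\<dots> \<le> 48 ^ Jcard K J * 48 ^ Jcard K J * exp (- (\<tau> / 4))"
    using Nu_card[OF sf] Nv_card[OF sf] by (intro mult_right_mono mult_mono) auto
  also have "\<dots> = 48 ^ (2 * Jcard K J) * exp (- \<tau> / 4)" by (simp add: power_mult mult_2 power_add)
  finally show ?thesis .
qed

lemma exp_term: assumes "0 \<le> (x::real)" shows "x ^ n / fact n \<le> exp x"
proof -
  have s: "(\<lambda>k. x ^ k /\<^sub>R fact k) sums exp x" by (rule exp_converges)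
  have "sum (\<lambda>k. x ^ k /\<^sub>R fact k) {n} \<le> suminf (\<lambda>k. x ^ k /\<^sub>R fact k)"
    by (rule sum_le_suminf[OF sums_summable[OF s]]) (use assms in auto)
  then show ?thesis using sums_unique[OF s] by (simp add: divide_inverse mult.commute)
qed

lemma binom_bound:
  assumes s: "0 < s"
  shows "real (N choose s) \<le> (real N * exp 1 / real s) ^ s"
proof -
  have f: "real (N choose s) * fact s \<le> real N ^ s"
    using binomial_fact_pow[of N s] by (metis of_nat_fact of_nat_le_iff of_nat_mult of_nat_power)
  have e: "real s ^ s / fact s \<le> exp (real s)" by (rule exp_term) simp
  have fp: "(0::real) < fact s" by simp
  have sp: "(0::real) < real s ^ s" using s by simp
  have "real s ^ s \<le> exp (real s) * fact s" using e fp by (simp add: divide_le_eq)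
  have "real (N choose s) \<le> real N ^ s / fact s" using f fp by (simp add: le_divide_eq)
  also have "\<dots> \<le> real N ^ s * exp (real s) / real s ^ s"
  proof -
    have "real N ^ s * real s ^ s \<le> real N ^ s * (exp (real s) * fact s)"
      using \<open>real s ^ s \<le> exp (real s) * fact s\<close> by (intro mult_left_mono) auto
    then show ?thesis using fp sp by (simp add: divide_simps mult_ac)
  qed
  also have "\<dots> = (real N * exp 1 / real s) ^ s"
    by (simp add: power_divide power_mult_distrib exp_of_nat_mult[symmetric])
  finally show ?thesis .
qed

lemma exp25: "2304 * exp (-25) \<le> (1/2::real)"
proof -
  have "(2::real) ^ 25 \<le> exp 1 ^ 25" by (intro power_mono) (use exp_ge_add_one_self[of 1] in auto)
  also have "exp 1 ^ 25 = exp (25::real)" using exp_of_nat_mult[of 25 "1::real"] by simp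
  finally have "4608 \<le> exp (25::real)" by simp
  then show ?thesis by (simp add: exp_minus field_simps)
qed

lemma TB:
  assumes s1: "1 \<le> s" and sN: "s \<le> N"
  shows "real (N choose s) * (48 ^ (2 * s) * exp (- (26 * (real s * ln (real N * exp 1 / real s))))) \<le> (1/2) ^ s"
proof -
  define x where "x = real N * exp 1 / real s"
  have x1: "exp 1 \<le> x" using s1 sN by (simp add: x_def field_simps)
  have x0: "0 < x" using x1 by (meson exp_gt_zero less_le_trans)
  define L where "L = ln x"
  have L1: "1 \<le> L" unfolding L_def using x0 x1 by (simp add: ln_ge_iff)
  have C: "real (N choose s) \<le> exp (real s * L)"
  proof -
    have "exp (real s * L) = x ^ s" unfolding L_def using x0 by (simp add: exp_of_nat_mult)
    then show ?thesis using binom_bound[of s N] s1 by (simp add: x_def)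
  qed
  have "real (N choose s) * (48 ^ (2 * s) * exp (- (26 * (real s * L))))
      \<le> exp (real s * L) * (48 ^ (2 * s) * exp (- (26 * (real s * L))))"
    by (intro mult_right_mono C) auto
  also have "\<dots> = 2304 ^ s * exp (- (25 * (real s * L)))"
  proof -
    have "exp (real s * L) * exp (- (26 * (real s * L))) = exp (- (25 * (real s * L)))"
      by (simp add: exp_add[symmetric] algebra_simps)
    moreover have "(48::real) ^ (2 * s) = 2304 ^ s" by (simp add: power_mult)
    ultimately show ?thesis by (simp add: mult_ac)
  qed
  also have "\<dots> \<le> 2304 ^ s * exp (- (25 * real s))"
    using L1 s1 by (intro mult_left_mono) auto
  also have "\<dots> = (2304 * exp (-25)) ^ s"
    by (simp add: power_mult_distrib exp_of_nat_mult[symmetric] mult.commute)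
  also have "\<dots> \<le> (1/2) ^ s" by (intro power_mono exp25) auto
  finally show ?thesis unfolding L_def x_def .
qed

lemma geo1: "(\<Sum>s\<in>{1..N}. (1/2::real) ^ s) = 1 - (1/2) ^ N"
  by (induction N) (auto simp: atLeastAtMostSuc_conv)

lemma pow_sum:
  fixes f :: "nat \<Rightarrow> real"
  assumes fin: "finite X"
  shows "(\<Sum>S\<in>Pow X. f (card S)) = (\<Sum>s\<le>card X. real (card X choose s) * f s)"
proof -
  have inner: "(\<Sum>S\<in>{S \<in> Pow X. card S = s}. f (card S)) = real (card X choose s) * f s" for s
  proof -
    have "{S \<in> Pow X. card S = s} = {S. S \<subseteq> X \<and> card S = s}" by auto
    then have c: "card {S \<in> Pow X. card S = s} = card X choose s" using n_subsets[OF fin] by simp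
    have "(\<Sum>S\<in>{S \<in> Pow X. card S = s}. f (card S)) = (\<Sum>S\<in>{S \<in> Pow X. card S = s}. f s)"
      by (rule sum.cong) auto
    then show ?thesis using c by simp
  qed
  have "(\<Sum>S\<in>Pow X. f (card S)) = (\<Sum>s\<in>{..card X}. \<Sum>S\<in>{S \<in> Pow X. card S = s}. f (card S))"
    by (rule sum.group[symmetric]) (use fin in \<open>auto intro: card_mono\<close>)
  also have "\<dots> = (\<Sum>s\<le>card X. real (card X choose s) * f s)"
    by (rule sum.cong[OF refl]) (rule inner)
  finally show ?thesis .
qed

lemma SF_fin: "finite {J. sparsity_family n K z J}"
proof -
  let ?B = "{..<K} \<times> {..<K}"
  let ?m = "\<lambda>f k l. if k < K \<and> l < K then f (k,l) else ({}::nat set)"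
  have "{J. sparsity_family n K z J} \<subseteq> ?m ` PiE ?B (\<lambda>_. Pow {..<n})"
  proof
    fix J assume "J \<in> {J. sparsity_family n K z J}"
    then have sf: "sparsity_family n K z J" by simp
    have "J = ?m (restrict (\<lambda>p. J (fst p) (snd p)) ?B)"
    proof (intro ext)
      fix k l show "J k l = ?m (restrict (\<lambda>p. J (fst p) (snd p)) ?B) k l"
        using sf unfolding sparsity_family_def by auto
    qed
    moreover have "restrict (\<lambda>p. J (fst p) (snd p)) ?B \<in> PiE ?B (\<lambda>_. Pow {..<n})"
      using sf_mem[OF sf] by auto
    ultimately show "J \<in> ?m ` PiE ?B (\<lambda>_. Pow {..<n})" by blast
  qed
  moreover have "finite (?m ` PiE ?B (\<lambda>_. Pow {..<n}))" by (intro finite_imageI finite_PiE) auto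
  ultimately show ?thesis by (rule finite_subset)
qed

lemma sf_eq:
  assumes "sparsity_family n K z J" "sparsity_family n K z J'"
    and "\<And>k l. k < K \<Longrightarrow> l < K \<Longrightarrow> J k l = J' k l"
  shows "J = J'"
proof (intro ext)
  fix k l show "J k l = J' k l"
    using assms unfolding sparsity_family_def by (cases "k < K \<and> l < K") auto
qed

lemma Du_inj: "inj_on (Du n K z) {J. sparsity_family n K z J}"
proof (rule inj_onI)
  fix J J' assume J: "J \<in> {J. sparsity_family n K z J}" and J': "J' \<in> {J. sparsity_family n K z J}"
    and e: "Du n K z J = Du n K z J'"
  have sf: "sparsity_family n K z J" and sf': "sparsity_family n K z J'" using J J' by auto
  have mem: "i \<in> J k l \<longleftrightarrow> (i,l) \<in> Du n K z J \<and> z i = k" if "sparsity_family n K z J" for J i k l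
    using sf_mem[OF that, of i k l] Du_iff[OF that, of "(i,l)"] by auto
  show "J = J'"
    by (rule sf_eq[OF sf sf']) (use mem[OF sf] mem[OF sf'] e in blast)
qed

lemma NSC:
  assumes cl: "clustering n K z"
  shows "(\<Sum>J\<in>{J. sparsity_family n K z J \<and> 1 \<le> Jcard K J}.
      48 ^ (2 * Jcard K J) * exp (- (26 * (real (Jcard K J) * ln (real n * real K * exp 1 / real (Jcard K J)))))) \<le> 1"
proof -
  let ?SF = "{J. sparsity_family n K z J}"
  let ?X = "{..<n} \<times> {..<K}"
  define g where "g s = (if 1 \<le> s then 48 ^ (2 * s) * exp (- (26 * (real s * ln (real n * real K * exp 1 / real s)))) else 0)" for s :: nat
  have g0: "0 \<le> g s" for s by (simp add: g_def)
  have "(\<Sum>J\<in>{J. sparsity_family n K z J \<and> 1 \<le> Jcard K J}.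
      48 ^ (2 * Jcard K J) * exp (- (26 * (real (Jcard K J) * ln (real n * real K * exp 1 / real (Jcard K J))))))
      = (\<Sum>J\<in>?SF. g (Jcard K J))"
    by (rule sum.mono_neutral_cong_left) (auto simp: SF_fin g_def)
  also have "\<dots> = (\<Sum>J\<in>?SF. g (card (Du n K z J)))"
    by (rule sum.cong) (auto simp: card_Du)
  also have "\<dots> = (\<Sum>S\<in>Du n K z ` ?SF. g (card S))"
    by (rule sum.reindex[OF Du_inj, symmetric, unfolded o_def])
  also have "\<dots> \<le> (\<Sum>S\<in>Pow ?X. g (card S))"
    by (rule sum_mono2) (auto simp: g0 Du_def)
  also have "\<dots> = (\<Sum>s\<le>card ?X. real (card ?X choose s) * g s)" by (rule pow_sum) simp
  also have "\<dots> \<le> (\<Sum>s\<le>card ?X. if 1 \<le> s then (1/2::real) ^ s else 0)"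
  proof (rule sum_mono)
    fix s assume s: "s \<in> {..card ?X}"
    show "real (card ?X choose s) * g s \<le> (if 1 \<le> s then (1/2::real) ^ s else 0)"
    proof (cases "1 \<le> s")
      case True
      have cX: "card ?X = n * K" by (simp add: card_cartesian_product)
      have "real (card ?X choose s) * g s \<le> (1/2) ^ s"
        using TB[OF True, of "n * K"] s True unfolding g_def cX by (simp add: mult_ac)
      then show ?thesis using True by simp
    qed (simp add: g_def)
  qed
  also have "\<dots> = (\<Sum>s\<in>{1..card ?X}. (1/2::real) ^ s)"
    by (rule sum.mono_neutral_cong_right) auto
  also have "\<dots> \<le> 1" unfolding geo1 by simp
  finally show ?thesis .
qed

definition hw :: "nat \<Rightarrow> nat \<Rightarrow> real" where
  "hw m s = 48 ^ (2 * s) * exp (- (26 * (real s * ln (real m * exp 1 / real s))))"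

lemma hw0: "hw m 0 = 1" by (simp add: hw_def)
lemma hw_nonneg: "0 \<le> hw m s" by (simp add: hw_def)

lemma BLK:
  assumes fin: "finite C" and m: "card C = m"
  shows "(\<Sum>S\<in>Pow C. if S = {} \<or> 2 \<le> card S then hw m (card S) else 0) \<le> max 1 (real m)"
proof -
  define psi where "psi s = (if s = 0 \<or> 2 \<le> s then hw m s else 0)" for s
  have "(\<Sum>S\<in>Pow C. if S = {} \<or> 2 \<le> card S then hw m (card S) else 0) = (\<Sum>S\<in>Pow C. psi (card S))"
  proof (rule sum.cong[OF refl])
    fix S assume "S \<in> Pow C"
    then have "finite S" using fin finite_subset by auto
    then show "(if S = {} \<or> 2 \<le> card S then hw m (card S) else 0) = psi (card S)"
      by (simp add: psi_def)
  qed
  also have "\<dots> = (\<Sum>s\<le>m. real (m choose s) * psi s)" using pow_sum[OF fin, of psi] m by simp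
  also have "\<dots> = real (m choose 0) * psi 0 + (\<Sum>s\<in>{1..m}. real (m choose s) * psi s)"
  proof -
    have "{..m} = insert 0 {1..m}" by auto
    then show ?thesis by simp
  qed
  also have "\<dots> \<le> 1 + (\<Sum>s\<in>{1..m}. if 2 \<le> s then (1/2::real) ^ s else 0)"
  proof -
    have "(\<Sum>s\<in>{1..m}. real (m choose s) * psi s) \<le> (\<Sum>s\<in>{1..m}. if 2 \<le> s then (1/2::real) ^ s else 0)"
    proof (rule sum_mono)
      fix s assume s: "s \<in> {1..m}"
      show "real (m choose s) * psi s \<le> (if 2 \<le> s then (1/2::real) ^ s else 0)"
      proof (cases "2 \<le> s")
        case True
        have "1 \<le> s" "s \<le> m" using s by auto
        from TB[OF this] show ?thesis using True by (simp add: psi_def hw_def)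
      next
        case False then show ?thesis using s by (simp add: psi_def)
      qed
    qed
    moreover have "real (m choose 0) * psi 0 = 1" by (simp add: psi_def hw0)
    ultimately show ?thesis by linarith
  qed
  also have "\<dots> \<le> max 1 (real m)"
  proof (cases "m \<le> 1")
    case True
    then have "(\<Sum>s\<in>{1..m}. if 2 \<le> s then (1/2::real) ^ s else 0) = 0" by (intro sum.neutral) auto
    then show ?thesis by simp
  next
    case False
    have "(\<Sum>s\<in>{1..m}. if 2 \<le> s then (1/2::real) ^ s else 0) \<le> (\<Sum>s\<in>{1..m}. (1/2::real) ^ s)"
      by (rule sum_mono) auto
    also have "\<dots> \<le> 1" unfolding geo1 by simp
    finally show ?thesis using False by simp
  qed
  finally show ?thesis .
qed

lemma SC:
  assumes cl: "clustering n K z"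
  shows "(\<Sum>J\<in>{J. sparsity_family n K z J \<and> (\<forall>k l. J k l = {} \<or> 2 \<le> card (J k l))}.
      \<Prod>p\<in>{..<K} \<times> {..<K}. hw (csize n z (fst p)) (card (J (fst p) (snd p))))
    \<le> (\<Prod>k<K. (max 1 (real (csize n z k))) ^ K)"
proof -
  let ?B = "{..<K} \<times> {..<K}"
  let ?SF = "{J. sparsity_family n K z J}"
  let ?SFL = "{J. sparsity_family n K z J \<and> (\<forall>k l. J k l = {} \<or> 2 \<le> card (J k l))}"
  define phi where "phi p S = (if S = {} \<or> 2 \<le> card S then hw (csize n z (fst p)) (card S) else 0)" for p :: "nat \<times> nat" and S :: "nat set"
  have phi0: "0 \<le> phi p S" for p S by (simp add: phi_def hw_nonneg)
  define R where "R J = restrict (\<lambda>p. J (fst p) (snd p)) ?B" for J :: "nat \<Rightarrow> nat \<Rightarrow> nat set"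
  have injR: "inj_on R ?SF"
  proof (rule inj_onI)
    fix J J' assume J: "J \<in> ?SF" and J': "J' \<in> ?SF" and e: "R J = R J'"
    show "J = J'"
    proof (rule sf_eq)
      show "sparsity_family n K z J" "sparsity_family n K z J'" using J J' by auto
      fix k l assume "k < K" "l < K"
      then show "J k l = J' k l" using fun_cong[OF e, of "(k,l)"] by (simp add: R_def)
    qed
  qed
  have "(\<Sum>J\<in>?SFL. \<Prod>p\<in>?B. hw (csize n z (fst p)) (card (J (fst p) (snd p))))
      = (\<Sum>J\<in>?SFL. \<Prod>p\<in>?B. phi p (J (fst p) (snd p)))"
    by (intro sum.cong refl prod.cong) (auto simp: phi_def)
  also have "\<dots> \<le> (\<Sum>J\<in>?SF. \<Prod>p\<in>?B. phi p (J (fst p) (snd p)))"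
    by (rule sum_mono2) (auto simp: SF_fin phi0 intro: prod_nonneg)
  also have "\<dots> = (\<Sum>J\<in>?SF. \<Prod>p\<in>?B. phi p (R J p))"
    by (intro sum.cong refl prod.cong) (auto simp: R_def)
  also have "\<dots> = (\<Sum>f\<in>R ` ?SF. \<Prod>p\<in>?B. phi p (f p))"
    by (rule sum.reindex[OF injR, symmetric, unfolded o_def])
  also have "\<dots> \<le> (\<Sum>f\<in>PiE ?B (\<lambda>p. Pow (comm n z (fst p))). \<Prod>p\<in>?B. phi p (f p))"
  proof (rule sum_mono2)
    show "finite (PiE ?B (\<lambda>p. Pow (comm n z (fst p))))" by (intro finite_PiE) (auto simp: comm_def)
    show "R ` ?SF \<subseteq> PiE ?B (\<lambda>p. Pow (comm n z (fst p)))"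
    proof
      fix f assume "f \<in> R ` ?SF"
      then obtain J where sf: "sparsity_family n K z J" and f: "f = R J" by blast
      have "\<forall>p\<in>?B. J (fst p) (snd p) \<in> Pow (comm n z (fst p))" using sf_sub[OF sf] by blast
      then show "f \<in> PiE ?B (\<lambda>p. Pow (comm n z (fst p)))" unfolding f R_def by (simp only: restrict_PiE_iff)
    qed
    show "\<And>b. b \<in> PiE ?B (\<lambda>p. Pow (comm n z (fst p))) - R ` ?SF \<Longrightarrow> 0 \<le> (\<Prod>p\<in>?B. phi p (b p))"
      by (intro prod_nonneg phi0)
  qed
  also have "\<dots> = (\<Prod>p\<in>?B. \<Sum>S\<in>Pow (comm n z (fst p)). phi p S)"
    by (rule prod_sum_PiE[symmetric]) (auto simp: comm_def)
  also have "\<dots> \<le> (\<Prod>p\<in>?B. max 1 (real (csize n z (fst p))))"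
  proof (rule prod_mono)
    fix p assume "p \<in> ?B"
    show "0 \<le> (\<Sum>S\<in>Pow (comm n z (fst p)). phi p S) \<and>
        (\<Sum>S\<in>Pow (comm n z (fst p)). phi p S) \<le> max 1 (real (csize n z (fst p)))"
    proof
      show "0 \<le> (\<Sum>S\<in>Pow (comm n z (fst p)). phi p S)" by (intro sum_nonneg phi0)
      show "(\<Sum>S\<in>Pow (comm n z (fst p)). phi p S) \<le> max 1 (real (csize n z (fst p)))"
        unfolding phi_def by (rule BLK) (auto simp: comm_def csize_def)
    qed
  qed
  also have "\<dots> = (\<Prod>k<K. (max 1 (real (csize n z k))) ^ K)"
  proof -
    have "(\<Prod>p\<in>?B. max 1 (real (csize n z (fst p)))) = (\<Prod>k<K. \<Prod>l<K. max 1 (real (csize n z k)))"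
      unfolding prod.cartesian_product by (simp add: case_prod_beta)
    then show ?thesis by simp
  qed
  finally show ?thesis .
qed

lemma op_norm_zero: "op_norm I C (\<lambda>i j. 0) = 0"
  using op_norm_le_frob[of I C "\<lambda>i j. 0"] op_norm_nonneg[of I C "\<lambda>i j. 0"] by simp

lemma pb_empty: "J k l = {} \<Longrightarrow> proj_block J k l X = (\<lambda>i j. 0)"
  by (intro ext) (simp add: proj_block_def)

lemma proj_zero:
  assumes sf: "sparsity_family n K z J" and J0: "Jcard K J = 0"
  shows "proj_op_sum n z J K X = 0"
proof -
  have "J k l = {}" if "k < K" "l < K" for k l
  proof -
    have "card (J k l) = 0" using J0 that by (simp add: Jcard_def)
    then show ?thesis using sf_fin[OF sf] by simp
  qed
  then show ?thesis unfolding proj_op_sum_def by (simp add: pb_empty op_norm_zero)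
qed

lemma block_frob:
  assumes sf: "sparsity_family n K z J" and X: "\<forall>i j. \<bar>X i j\<bar> \<le> 1"
  shows "(op_norm (comm n z k) (comm n z l) (proj_block J k l X))\<^sup>2 \<le> real (card (J k l)) * real (card (J l k))"
proof -
  let ?M = "proj_block J k l X"
  have fin: "finite (comm n z k')" for k' by (auto simp: comm_def)
  have "(\<Sum>i\<in>comm n z k. \<Sum>j\<in>comm n z l. (?M i j)\<^sup>2) = (\<Sum>i\<in>J k l. \<Sum>j\<in>comm n z l. (?M i j)\<^sup>2)"
    by (rule sum.mono_neutral_right[OF fin sf_sub[OF sf]]) (auto simp: proj_block_def)
  also have "\<dots> = (\<Sum>i\<in>J k l. \<Sum>j\<in>J l k. (?M i j)\<^sup>2)"
    by (intro sum.cong refl sum.mono_neutral_right[OF fin sf_sub[OF sf]]) (auto simp: proj_block_def)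
  also have "\<dots> \<le> (\<Sum>i\<in>J k l. \<Sum>j\<in>J l k. 1)"
  proof (intro sum_mono)
    fix i j
    have "\<bar>?M i j\<bar> \<le> 1" using X by (simp add: proj_block_def)
    then show "(?M i j)\<^sup>2 \<le> 1" by (simp add: abs_square_le_1)
  qed
  also have "\<dots> = real (card (J k l)) * real (card (J l k))" by simp
  finally have S: "(\<Sum>i\<in>comm n z k. \<Sum>j\<in>comm n z l. (?M i j)\<^sup>2) \<le> real (card (J k l)) * real (card (J l k))" .
  have "op_norm (comm n z k) (comm n z l) ?M \<le> sqrt (\<Sum>i\<in>comm n z k. \<Sum>j\<in>comm n z l. (?M i j)\<^sup>2)"
    by (rule op_norm_le_frob)
  then have "(op_norm (comm n z k) (comm n z l) ?M)\<^sup>2 \<le> (sqrt (\<Sum>i\<in>comm n z k. \<Sum>j\<in>comm n z l. (?M i j)\<^sup>2))\<^sup>2"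
    using op_norm_nonneg by (intro power_mono) auto
  also have "\<dots> = (\<Sum>i\<in>comm n z k. \<Sum>j\<in>comm n z l. (?M i j)\<^sup>2)" by (simp add: sum_nonneg)
  finally show ?thesis using S by linarith
qed

lemma Tge:
  assumes "c \<le> m"
  shows "real c \<le> real c * ln (real m * exp 1 / real c)"
proof (cases "c = 0")
  case False
  have x1: "exp 1 \<le> real m * exp 1 / real c" using assms False by (simp add: field_simps)
  then have "1 \<le> ln (real m * exp 1 / real c)"
    by (subst ln_ge_iff) (auto intro: less_le_trans[OF exp_gt_zero])
  then show ?thesis using mult_left_mono[of 1 "ln (real m * exp 1 / real c)" "real c"] by simp
qed simp

lemma card_J_le: "sparsity_family n K z J \<Longrightarrow> card (J k l) \<le> csize n z k"
  unfolding csize_def by (rule card_mono[OF _ sf_sub]) (auto simp: comm_def)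

lemma RED:
  assumes sf: "sparsity_family n K z J" and X: "\<forall>i j. \<bar>X i j\<bar> \<le> 1" and C: "2 \<le> C1 + C2"
  defines "JL \<equiv> (\<lambda>k l. if 2 \<le> card (J k l) \<and> 2 \<le> card (J l k) then J k l else {})"
  shows "sparsity_family n K z JL" and "\<forall>k l. JL k l = {} \<or> 2 \<le> card (JL k l)"
    and "proj_op_sum n z J K X - F1_s C1 C2 n z J K \<le> proj_op_sum n z JL K X - F1_s C1 C2 n z JL K"
proof -
  define cnd where "cnd k l \<longleftrightarrow> 2 \<le> card (J k l) \<and> 2 \<le> card (J l k)" for k l
  have cs: "cnd k l = cnd l k" for k l by (auto simp: cnd_def)
  have JLd: "JL k l = (if cnd k l then J k l else {})" for k l by (simp add: JL_def cnd_def)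
  show sfL: "sparsity_family n K z JL"
    using sf unfolding sparsity_family_def JLd by auto
  show "\<forall>k l. JL k l = {} \<or> 2 \<le> card (JL k l)" by (auto simp: JLd cnd_def)
  define s where "s k l = real (card (J k l))" for k l
  define a where "a J' k l = op_norm (comm n z k) (comm n z l) (proj_block J' k l X)" for J' k l
  have blk: "(a J k l)\<^sup>2 \<le> (a JL k l)\<^sup>2 + (if cnd k l then 0 else s k l + s l k)" for k l
  proof (cases "cnd k l")
    case True
    then have "JL k l = J k l" "JL l k = J l k" using cs by (auto simp: JLd)
    then have "proj_block JL k l X = proj_block J k l X" by (intro ext) (simp add: proj_block_def)
    then show ?thesis using True by (simp add: a_def)
  next
    case False
    have "JL k l = {}" using False by (simp add: JLd)
    then have z: "a JL k l = 0" by (simp add: a_def pb_empty op_norm_zero)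
    have "(a J k l)\<^sup>2 \<le> s k l * s l k" unfolding a_def s_def by (rule block_frob[OF sf X])
    also have "\<dots> \<le> s k l + s l k"
    proof -
      have "card (J k l) \<le> 1 \<or> card (J l k) \<le> 1" using False by (auto simp: cnd_def)
      then show ?thesis
      proof
        assume h: "card (J k l) \<le> 1"
        have "real (card (J k l)) * real (card (J l k)) \<le> 1 * real (card (J l k))"
          using h by (intro mult_right_mono) auto
        then show ?thesis by (simp add: s_def)
      next
        assume h: "card (J l k) \<le> 1"
        have "real (card (J k l)) * real (card (J l k)) \<le> real (card (J k l)) * 1"
          using h by (intro mult_left_mono) auto
        then show ?thesis by (simp add: s_def)
      qed
    qed
    finally show ?thesis using False z by simp
  qed
  define D where "D = (\<Sum>k<K. \<Sum>l<K. if cnd k l then 0 else s k l)"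
  have D0: "0 \<le> D" unfolding D_def s_def by (intro sum_nonneg) auto
  have P1: "proj_op_sum n z J K X \<le> proj_op_sum n z JL K X + 2 * D"
  proof -
    have "proj_op_sum n z J K X \<le> (\<Sum>k<K. \<Sum>l<K. (a JL k l)\<^sup>2 + (if cnd k l then 0 else s k l + s l k))"
      unfolding proj_op_sum_def a_def[symmetric] by (intro sum_mono blk)
    also have "\<dots> = (\<Sum>k<K. \<Sum>l<K. (a JL k l)\<^sup>2 + ((if cnd k l then 0 else s k l) + (if cnd k l then 0 else s l k)))"
      by (intro sum.cong refl) simp
    also have "\<dots> = (\<Sum>k<K. \<Sum>l<K. (a JL k l)\<^sup>2) + ((\<Sum>k<K. \<Sum>l<K. if cnd k l then 0 else s k l) + (\<Sum>k<K. \<Sum>l<K. if cnd k l then 0 else s l k))"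
      by (simp only: sum.distrib)
    also have "(\<Sum>k<K. \<Sum>l<K. (a JL k l)\<^sup>2) = proj_op_sum n z JL K X"
      by (simp add: proj_op_sum_def a_def)
    also have "(\<Sum>k<K. \<Sum>l<K. if cnd k l then 0 else s l k) = D"
      unfolding D_def by (subst sum.swap) (simp add: cs)
    finally show ?thesis unfolding D_def by simp
  qed
  define T where "T J' k l = real (card (J' k l)) * ln (real (csize n z k) * exp 1 / real (card (J' k l)))" for J' :: "nat \<Rightarrow> nat \<Rightarrow> nat set" and k l :: nat
  have TT: "T J k l - T JL k l = (if cnd k l then 0 else T J k l)" for k l
    by (simp add: T_def JLd)
  have Tge': "(if cnd k l then 0 else s k l) \<le> (if cnd k l then 0 else T J k l)" for k l
    unfolding s_def T_def using Tge[OF card_J_le[OF sf, of k l]] by simp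
  have F: "F1_s C1 C2 n z J K - F1_s C1 C2 n z JL K = (C1 + C2) * (\<Sum>k<K. \<Sum>l<K. T J k l - T JL k l)"
  proof -
    define R where "R = ln (real n) + real n * ln (real K) + real K * (\<Sum>k<K. ln (real (csize n z k)))"
    have e1: "F1_s C1 C2 n z J K = (C1 + C2) * (\<Sum>k<K. \<Sum>l<K. T J k l) + C2 * R"
      by (simp add: F1_s_def T_def R_def)
    have e2: "F1_s C1 C2 n z JL K = (C1 + C2) * (\<Sum>k<K. \<Sum>l<K. T JL k l) + C2 * R"
      by (simp add: F1_s_def T_def R_def)
    have e3: "(\<Sum>k<K. \<Sum>l<K. T J k l - T JL k l) = (\<Sum>k<K. \<Sum>l<K. T J k l) - (\<Sum>k<K. \<Sum>l<K. T JL k l)"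
      by (simp only: sum_subtractf)
    show ?thesis unfolding e1 e2 e3 by (simp add: right_diff_distrib)
  qed
  have "D \<le> (\<Sum>k<K. \<Sum>l<K. T J k l - T JL k l)"
    unfolding D_def TT by (intro sum_mono Tge')
  then have "2 * D \<le> (C1 + C2) * (\<Sum>k<K. \<Sum>l<K. T J k l - T JL k l)"
  proof -
    have "2 * D \<le> (C1 + C2) * D" using C D0 by (rule mult_right_mono)
    also have "\<dots> \<le> (C1 + C2) * (\<Sum>k<K. \<Sum>l<K. T J k l - T JL k l)"
      using C \<open>D \<le> _\<close> by (intro mult_left_mono) auto
    finally show ?thesis .
  qed
  then show "proj_op_sum n z J K X - F1_s C1 C2 n z J K \<le> proj_op_sum n z JL K X - F1_s C1 C2 n z JL K"
    using P1 F by linarith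
qed

lemma comm_restrict: "comm n (restrict z {..<n}) k = comm n z k"
  by (auto simp: comm_def)

lemma csize_restrict: "csize n (restrict z {..<n}) k = csize n z k"
  by (simp add: csize_def comm_restrict)

lemma sf_restrict: "sparsity_family n K (restrict z {..<n}) J = sparsity_family n K z J"
  by (simp add: sparsity_family_def comm_restrict)

lemma cl_restrict: "clustering n K z \<Longrightarrow> clustering n K (restrict z {..<n})"
  by (simp add: clustering_def)

lemma proj_restrict: "proj_op_sum n (restrict z {..<n}) J K X = proj_op_sum n z J K X"
  by (simp add: proj_op_sum_def comm_restrict)

lemma F1s_restrict: "F1_s C1 C2 n (restrict z {..<n}) J K = F1_s C1 C2 n z J K"
  by (simp add: F1_s_def csize_restrict)

lemma restrict_PiE_mem: "clustering n K z \<Longrightarrow> restrict z {..<n} \<in> PiE {..<n} (\<lambda>_. {..<K})"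
  by (auto simp: clustering_def)

lemma PiE_cl: "z \<in> PiE {..<n} (\<lambda>_. {..<K}) \<Longrightarrow> clustering n K z"
  by (auto simp: clustering_def)

lemma card_Zs: "card (PiE {..<n} (\<lambda>_. {..<K::nat})) = K ^ n"
  by (simp add: card_PiE)

lemma union3:
  fixes M :: "'a pmf"
  assumes fI: "finite I" and fZ: "\<And>i. i \<in> I \<Longrightarrow> finite (Z i)"
    and fS: "\<And>i z. i \<in> I \<Longrightarrow> z \<in> Z i \<Longrightarrow> finite (S i z)"
  shows "measure_pmf.prob M (\<Union>i\<in>I. \<Union>z\<in>Z i. \<Union>j\<in>S i z. E i z j)
     \<le> (\<Sum>i\<in>I. \<Sum>z\<in>Z i. \<Sum>j\<in>S i z. measure_pmf.prob M (E i z j))"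
proof -
  have "measure_pmf.prob M (\<Union>i\<in>I. \<Union>z\<in>Z i. \<Union>j\<in>S i z. E i z j)
      \<le> (\<Sum>i\<in>I. measure_pmf.prob M (\<Union>z\<in>Z i. \<Union>j\<in>S i z. E i z j))"
    by (rule measure_pmf.finite_measure_subadditive_finite[OF fI]) simp
  also have "\<dots> \<le> (\<Sum>i\<in>I. \<Sum>z\<in>Z i. measure_pmf.prob M (\<Union>j\<in>S i z. E i z j))"
    by (intro sum_mono measure_pmf.finite_measure_subadditive_finite fZ) simp_all
  also have "\<dots> \<le> (\<Sum>i\<in>I. \<Sum>z\<in>Z i. \<Sum>j\<in>S i z. measure_pmf.prob M (E i z j))"
    by (intro sum_mono measure_pmf.finite_measure_subadditive_finite fS) simp_all
  finally show ?thesis .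
qed

lemma Jcard_le: "sparsity_family n K z J \<Longrightarrow> Jcard K J \<le> n * K"
proof -
  assume sf: "sparsity_family n K z J"
  have "card (Du n K z J) \<le> card ({..<n} \<times> {..<K})" by (rule card_mono[OF _ Du_sub]) simp
  then show ?thesis using card_Du[OF sf] by (simp add: card_cartesian_product)
qed

lemma F1ns_nonneg:
  assumes sf: "sparsity_family n K z J" and K: "K \<in> {1..n}"
  shows "0 \<le> F1_ns 100 4 n J K"
proof -
  have a: "real (Jcard K J) \<le> real (Jcard K J) * ln (real n * real K * exp 1 / real (Jcard K J))"
    using Tge[OF Jcard_le[OF sf]] by simp
  have "0 \<le> ln (real n)" "0 \<le> ln (real K)" using K by auto
  then show ?thesis using a unfolding F1_ns_def by (simp add: mult.assoc)
qed

lemma F1s_nonneg: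
  assumes sf: "sparsity_family n K z J" and K: "K \<in> {1..n}"
  shows "0 \<le> F1_s 100 4 n z J K"
proof -
  have a: "0 \<le> (\<Sum>k<K. \<Sum>l<K. real (card (J k l)) * ln (real (csize n z k) * exp 1 / real (card (J k l))))"
  proof (intro sum_nonneg)
    fix k l
    show "0 \<le> real (card (J k l)) * ln (real (csize n z k) * exp 1 / real (card (J k l)))"
      using Tge[OF card_J_le[OF sf, of k l]] by linarith
  qed
  have lnn: "0 \<le> ln (real m)" for m :: nat by (cases m) auto
  have b: "0 \<le> (\<Sum>k<K. ln (real (csize n z k)))"
    by (intro sum_nonneg lnn)
  have "0 \<le> ln (real n)" "0 \<le> ln (real K)" using K by auto
  then show ?thesis using a b unfolding F1_s_def by simp
qed

lemma Xbound: "\<forall>i j. 0 \<le> P i j \<and> P i j \<le> 1 \<and> P i j = P j i \<Longrightarrow> \<forall>i j. \<bar>of_bool (A i j) - P i j\<bar> \<le> (1::real)"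
  by (auto simp: of_bool_def)

lemma exp_nat_ln: "0 < x \<Longrightarrow> x ^ m = exp (real m * ln x)"
  by (simp add: exp_of_nat_mult)

lemma bad_ns:
  assumes P: "\<forall>i j. 0 \<le> P i j \<and> P i j \<le> 1 \<and> P i j = P j i" and t: "t > 0"
  shows "measure_pmf.prob (adj_pmf n P) {A. \<exists>K z J. K \<in> {1..n} \<and> clustering n K z \<and> sparsity_family n K z J \<and>
      proj_op_sum n z J K (\<lambda>i j. of_bool (A i j) - P i j) - F1_ns 100 4 n J K > 4 * t} \<le> exp (- t)"
proof -
  let ?X = "\<lambda>A i j. of_bool (A i j) - P i j"
  define Zs where "Zs K = PiE {..<n} (\<lambda>_. {..<K::nat})" for K
  define SF1 where "SF1 K z = {J. sparsity_family n K z J \<and> 1 \<le> Jcard K J}" for K z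
  define E where "E K z J = {A. proj_op_sum n z J K (?X A) > F1_ns 100 4 n J K + 4 * t}" for K z J
  define W where "W K J = 48 ^ (2 * Jcard K J) * exp (- (26 * (real (Jcard K J) * ln (real n * real K * exp 1 / real (Jcard K J)))))" for K J
  define c where "c K = exp (- (3 * ln (real n) + real n * ln (real K))) * exp (- t)" for K
  have sub: "{A. \<exists>K z J. K \<in> {1..n} \<and> clustering n K z \<and> sparsity_family n K z J \<and>
      proj_op_sum n z J K (?X A) - F1_ns 100 4 n J K > 4 * t} \<subseteq> (\<Union>K\<in>{1..n}. \<Union>z\<in>Zs K. \<Union>J\<in>SF1 K z. E K z J)"
  proof
    fix A assume "A \<in> {A. \<exists>K z J. K \<in> {1..n} \<and> clustering n K z \<and> sparsity_family n K z J \<and>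
      proj_op_sum n z J K (?X A) - F1_ns 100 4 n J K > 4 * t}"
    then obtain K z J where K: "K \<in> {1..n}" and cl: "clustering n K z" and sf: "sparsity_family n K z J"
      and gt: "proj_op_sum n z J K (?X A) - F1_ns 100 4 n J K > 4 * t" by blast
    let ?z = "restrict z {..<n}"
    have sf': "sparsity_family n K ?z J" using sf by (simp add: sf_restrict)
    have J1: "1 \<le> Jcard K J"
    proof (rule ccontr)
      assume "\<not> 1 \<le> Jcard K J"
      then have "Jcard K J = 0" by simp
      then have "proj_op_sum n z J K (?X A) = 0" by (rule proj_zero[OF sf])
      then show False using gt t F1ns_nonneg[OF sf K] by linarith
    qed
    have "A \<in> E K ?z J" using gt by (simp add: E_def proj_restrict)
    moreover have "?z \<in> Zs K" unfolding Zs_def by (rule restrict_PiE_mem[OF cl])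
    moreover have "J \<in> SF1 K ?z" using sf' J1 by (simp add: SF1_def)
    ultimately show "A \<in> (\<Union>K\<in>{1..n}. \<Union>z\<in>Zs K. \<Union>J\<in>SF1 K z. E K z J)" using K by blast
  qed
  have per: "measure_pmf.prob (adj_pmf n P) (E K z J) \<le> W K J * c K"
    if K: "K \<in> {1..n}" and z: "z \<in> Zs K" and J: "J \<in> SF1 K z" for K z J
  proof -
    have cl: "clustering n K z" using z by (simp add: Zs_def PiE_cl)
    have sf: "sparsity_family n K z J" using J by (simp add: SF1_def)
    have tau: "F1_ns 100 4 n J K + 4 * t > 0" using F1ns_nonneg[OF sf K] t by linarith
    have "measure_pmf.prob (adj_pmf n P) (E K z J) \<le> 48 ^ (2 * Jcard K J) * exp (- (F1_ns 100 4 n J K + 4 * t) / 4)"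
      unfolding E_def by (rule CL[OF P cl sf tau])
    also have "- (F1_ns 100 4 n J K + 4 * t) / 4 =
        (- (26 * (real (Jcard K J) * ln (real n * real K * exp 1 / real (Jcard K J))))) +
        ((- (3 * ln (real n) + real n * ln (real K))) + (- t))"
    proof -
      define a where "a = real (Jcard K J) * ln (real n * real K * exp 1 / real (Jcard K J))"
      define b where "b = 3 * ln (real n) + real n * ln (real K)"
      have "F1_ns 100 4 n J K = 104 * a + 4 * b" unfolding F1_ns_def a_def b_def by simp
      then show ?thesis unfolding a_def[symmetric] b_def[symmetric] by simp
    qed
    also have "48 ^ (2 * Jcard K J) * exp \<dots> = W K J * c K"
      by (simp only: exp_add W_def c_def mult.assoc)
    finally show ?thesis .
  qed
  have c0: "0 \<le> c K" for K by (simp add: c_def)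
  have finZ: "finite (Zs K)" for K by (simp add: Zs_def finite_PiE)
  have finS: "finite (SF1 K z)" for K z by (rule finite_subset[OF _ SF_fin]) (auto simp: SF1_def)
  have "measure_pmf.prob (adj_pmf n P) {A. \<exists>K z J. K \<in> {1..n} \<and> clustering n K z \<and> sparsity_family n K z J \<and>
      proj_op_sum n z J K (?X A) - F1_ns 100 4 n J K > 4 * t}
      \<le> measure_pmf.prob (adj_pmf n P) (\<Union>K\<in>{1..n}. \<Union>z\<in>Zs K. \<Union>J\<in>SF1 K z. E K z J)"
    by (rule measure_pmf.finite_measure_mono[OF sub]) simp
  also have "\<dots> \<le> (\<Sum>K\<in>{1..n}. \<Sum>z\<in>Zs K. \<Sum>J\<in>SF1 K z. measure_pmf.prob (adj_pmf n P) (E K z J))"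
    by (rule union3) (auto simp: finZ finS)
  also have "\<dots> \<le> (\<Sum>K\<in>{1..n}. \<Sum>z\<in>Zs K. \<Sum>J\<in>SF1 K z. W K J * c K)"
    by (intro sum_mono per) auto
  also have "\<dots> \<le> (\<Sum>K\<in>{1..n}. \<Sum>z\<in>Zs K. c K)"
  proof (intro sum_mono)
    fix K z assume K: "K \<in> {1..n}" and z: "z \<in> Zs K"
    have cl: "clustering n K z" using z by (simp add: Zs_def PiE_cl)
    have "(\<Sum>J\<in>SF1 K z. W K J * c K) = (\<Sum>J\<in>SF1 K z. W K J) * c K" by (simp add: sum_distrib_right)
    also have "\<dots> \<le> 1 * c K"
      using NSC[OF cl] c0 unfolding SF1_def W_def by (intro mult_right_mono) auto
    finally show "(\<Sum>J\<in>SF1 K z. W K J * c K) \<le> c K" by simp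
  qed
  also have "\<dots> = (\<Sum>K\<in>{1..n}. exp (- (2 * ln (real n))) * exp (- t) / real n)"
  proof (rule sum.cong[OF refl])
    fix K assume K: "K \<in> {1..n}"
    have Kp: "0 < real K" and np: "0 < real n" using K by auto
    have "(\<Sum>z\<in>Zs K. c K) = real K ^ n * c K" by (simp add: Zs_def card_PiE)
    also have "\<dots> = exp (real n * ln (real K)) * exp (- (3 * ln (real n) + real n * ln (real K))) * exp (- t)"
      by (simp add: c_def exp_nat_ln[OF Kp])
    also have "\<dots> = exp (- (2 * ln (real n))) * exp (- t) / exp (ln (real n))"
      by (simp add: exp_add[symmetric] exp_diff[symmetric] algebra_simps)
    also have "\<dots> = exp (- (2 * ln (real n))) * exp (- t) / real n" using np by simp
    finally show "(\<Sum>z\<in>Zs K. c K) = exp (- (2 * ln (real n))) * exp (- t) / real n" .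
  qed
  also have "\<dots> \<le> exp (- (2 * ln (real n))) * exp (- t)" by (cases "n = 0") auto
  also have "\<dots> \<le> 1 * exp (- t)"
  proof (cases "n = 0")
    case False
    then have "0 \<le> ln (real n)" by simp
    then have "exp (- (2 * ln (real n))) \<le> 1" by simp
    then show ?thesis by (intro mult_right_mono) auto
  qed simp
  finally show ?thesis by simp
qed

lemma max_exp_cancel:
  "(\<Prod>k<K. (max 1 (real (csize n z k))) ^ K) * exp (- (real K * (\<Sum>k<K. ln (real (csize n z k))))) = 1"
proof -
  have e: "exp (- (real K * (\<Sum>k<K. ln (real (csize n z k))))) = (\<Prod>k<K. exp (- (real K * ln (real (csize n z k)))))"
    by (simp add: exp_sum[symmetric] sum_distrib_left sum_negf)
  have one: "(max 1 (real m)) ^ K * exp (- (real K * ln (real m))) = 1" for m :: nat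
  proof (cases "m = 0")
    case True then show ?thesis by simp
  next
    case False
    then have mp: "0 < real m" by simp
    have "max 1 (real m) = real m" using False by simp
    then show ?thesis using mp by (simp add: exp_nat_ln[OF mp] exp_add[symmetric])
  qed
  show ?thesis unfolding e prod.distrib[symmetric] by (simp add: one)
qed

lemma W_eq:
  "(\<Prod>p\<in>{..<K} \<times> {..<K}. hw (csize n z (fst p)) (card (J (fst p) (snd p)))) =
    48 ^ (2 * Jcard K J) * exp (- (26 * (\<Sum>k<K. \<Sum>l<K. real (card (J k l)) * ln (real (csize n z k) * exp 1 / real (card (J k l))))))"
proof -
  let ?B = "{..<K} \<times> {..<K}"
  let ?c = "\<lambda>p. card (J (fst p) (snd p))"
  let ?T = "\<lambda>p. real (?c p) * ln (real (csize n z (fst p)) * exp 1 / real (?c p))"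
  have "(\<Prod>p\<in>?B. hw (csize n z (fst p)) (?c p)) = (\<Prod>p\<in>?B. (48::real) ^ (2 * ?c p)) * (\<Prod>p\<in>?B. exp (- (26 * ?T p)))"
    by (simp add: hw_def prod.distrib)
  also have "(\<Prod>p\<in>?B. (48::real) ^ (2 * ?c p)) = 48 ^ (\<Sum>p\<in>?B. 2 * ?c p)" by (simp add: power_sum)
  also have "(\<Sum>p\<in>?B. 2 * ?c p) = 2 * Jcard K J"
    by (simp add: Jcard_def sum_distrib_left[symmetric] sum.cartesian_product case_prod_beta)
  also have "(\<Prod>p\<in>?B. exp (- (26 * ?T p))) = exp (\<Sum>p\<in>?B. - (26 * ?T p))" by (simp add: exp_sum)
  also have "(\<Sum>p\<in>?B. - (26 * ?T p)) = - (26 * (\<Sum>k<K. \<Sum>l<K. real (card (J k l)) * ln (real (csize n z k) * exp 1 / real (card (J k l)))))"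
    by (simp add: sum_negf sum_distrib_left[symmetric] sum.cartesian_product case_prod_beta)
  finally show ?thesis .
qed

lemma bad_s:
  assumes P: "\<forall>i j. 0 \<le> P i j \<and> P i j \<le> 1 \<and> P i j = P j i" and t: "t > 0"
  shows "measure_pmf.prob (adj_pmf n P) {A. \<exists>K z J. K \<in> {1..n} \<and> clustering n K z \<and> sparsity_family n K z J \<and>
      proj_op_sum n z J K (\<lambda>i j. of_bool (A i j) - P i j) - F1_s 100 4 n z J K > 4 * t} \<le> exp (- t)"
proof -
  let ?X = "\<lambda>A i j. of_bool (A i j) - P i j"
  define Zs where "Zs K = PiE {..<n} (\<lambda>_. {..<K::nat})" for K
  define SFL where "SFL K z = {J. sparsity_family n K z J \<and> (\<forall>k l. J k l = {} \<or> 2 \<le> card (J k l))}" for K z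
  define E where "E K z J = {A. proj_op_sum n z J K (?X A) > F1_s 100 4 n z J K + 4 * t}" for K z J
  define W where "W K z J = (\<Prod>p\<in>{..<K} \<times> {..<K}. hw (csize n z (fst p)) (card (J (fst p) (snd p))))" for K z and J :: "nat \<Rightarrow> nat \<Rightarrow> nat set"
  define S where "S K z = (\<Sum>k<K. ln (real (csize n z k)))" for K z
  define c where "c K z = exp (- (ln (real n) + real n * ln (real K))) * (exp (- (real K * S K z)) * exp (- t))" for K z
  have sub: "{A. \<exists>K z J. K \<in> {1..n} \<and> clustering n K z \<and> sparsity_family n K z J \<and>
      proj_op_sum n z J K (?X A) - F1_s 100 4 n z J K > 4 * t} \<subseteq> (\<Union>K\<in>{1..n}. \<Union>z\<in>Zs K. \<Union>J\<in>SFL K z. E K z J)"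
  proof
    fix A assume "A \<in> {A. \<exists>K z J. K \<in> {1..n} \<and> clustering n K z \<and> sparsity_family n K z J \<and>
      proj_op_sum n z J K (?X A) - F1_s 100 4 n z J K > 4 * t}"
    then obtain K z J where K: "K \<in> {1..n}" and cl: "clustering n K z" and sf: "sparsity_family n K z J"
      and gt: "proj_op_sum n z J K (?X A) - F1_s 100 4 n z J K > 4 * t" by blast
    let ?z = "restrict z {..<n}"
    have sf': "sparsity_family n K ?z J" using sf by (simp add: sf_restrict)
    have C: "(2::real) \<le> 100 + 4" by simp
    note R = RED[OF sf' Xbound[OF P, of A] C]
    let ?JL = "\<lambda>k l. if 2 \<le> card (J k l) \<and> 2 \<le> card (J l k) then J k l else {}"
    have "4 * t < proj_op_sum n ?z ?JL K (?X A) - F1_s 100 4 n ?z ?JL K"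
      using R(3) gt by (simp add: proj_restrict F1s_restrict)
    then have "A \<in> E K ?z ?JL" by (simp add: E_def)
    moreover have "?z \<in> Zs K" unfolding Zs_def by (rule restrict_PiE_mem[OF cl])
    moreover have "?JL \<in> SFL K ?z" using R(1) R(2) by (simp add: SFL_def)
    ultimately show "A \<in> (\<Union>K\<in>{1..n}. \<Union>z\<in>Zs K. \<Union>J\<in>SFL K z. E K z J)" using K by blast
  qed
  have per: "measure_pmf.prob (adj_pmf n P) (E K z J) \<le> W K z J * c K z"
    if K: "K \<in> {1..n}" and z: "z \<in> Zs K" and J: "J \<in> SFL K z" for K z J
  proof -
    have cl: "clustering n K z" using z by (simp add: Zs_def PiE_cl)
    have sf: "sparsity_family n K z J" using J by (simp add: SFL_def)
    have tau: "F1_s 100 4 n z J K + 4 * t > 0" using F1s_nonneg[OF sf K] t by linarith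
    have "measure_pmf.prob (adj_pmf n P) (E K z J) \<le> 48 ^ (2 * Jcard K J) * exp (- (F1_s 100 4 n z J K + 4 * t) / 4)"
      unfolding E_def by (rule CL[OF P cl sf tau])
    also have "- (F1_s 100 4 n z J K + 4 * t) / 4 =
        (- (26 * (\<Sum>k<K. \<Sum>l<K. real (card (J k l)) * ln (real (csize n z k) * exp 1 / real (card (J k l)))))) +
        ((- (ln (real n) + real n * ln (real K))) + ((- (real K * S K z)) + (- t)))"
    proof -
      define a where "a = (\<Sum>k<K. \<Sum>l<K. real (card (J k l)) * ln (real (csize n z k) * exp 1 / real (card (J k l))))"
      define b where "b = ln (real n) + real n * ln (real K)"
      have "F1_s 100 4 n z J K = 104 * a + 4 * (b + real K * S K z)" unfolding F1_s_def a_def b_def S_def by simp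
      then show ?thesis unfolding a_def[symmetric] b_def[symmetric] by simp
    qed
    also have "48 ^ (2 * Jcard K J) * exp \<dots> = W K z J * c K z"
      by (simp only: exp_add W_def c_def W_eq mult.assoc)
    finally show ?thesis .
  qed
  have c0: "0 \<le> c K z" for K z by (simp add: c_def)
  have finZ: "finite (Zs K)" for K by (simp add: Zs_def finite_PiE)
  have finS: "finite (SFL K z)" for K z by (rule finite_subset[OF _ SF_fin]) (auto simp: SFL_def)
  have "measure_pmf.prob (adj_pmf n P) {A. \<exists>K z J. K \<in> {1..n} \<and> clustering n K z \<and> sparsity_family n K z J \<and>
      proj_op_sum n z J K (?X A) - F1_s 100 4 n z J K > 4 * t}
      \<le> measure_pmf.prob (adj_pmf n P) (\<Union>K\<in>{1..n}. \<Union>z\<in>Zs K. \<Union>J\<in>SFL K z. E K z J)"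
    by (rule measure_pmf.finite_measure_mono[OF sub]) simp
  also have "\<dots> \<le> (\<Sum>K\<in>{1..n}. \<Sum>z\<in>Zs K. \<Sum>J\<in>SFL K z. measure_pmf.prob (adj_pmf n P) (E K z J))"
    by (rule union3) (auto simp: finZ finS)
  also have "\<dots> \<le> (\<Sum>K\<in>{1..n}. \<Sum>z\<in>Zs K. \<Sum>J\<in>SFL K z. W K z J * c K z)"
    by (intro sum_mono per) auto
  also have "\<dots> \<le> (\<Sum>K\<in>{1..n}. \<Sum>z\<in>Zs K. exp (- (ln (real n) + real n * ln (real K))) * exp (- t))"
  proof (intro sum_mono)
    fix K z assume K: "K \<in> {1..n}" and z: "z \<in> Zs K"
    have cl: "clustering n K z" using z by (simp add: Zs_def PiE_cl)
    have "(\<Sum>J\<in>SFL K z. W K z J * c K z) = (\<Sum>J\<in>SFL K z. W K z J) * c K z" by (simp add: sum_distrib_right)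
    also have "\<dots> \<le> (\<Prod>k<K. (max 1 (real (csize n z k))) ^ K) * c K z"
      using SC[OF cl] c0 unfolding SFL_def W_def by (intro mult_right_mono) auto
    also have "\<dots> = exp (- (ln (real n) + real n * ln (real K))) *
        (((\<Prod>k<K. (max 1 (real (csize n z k))) ^ K) * exp (- (real K * S K z))) * exp (- t))"
      by (simp add: c_def mult_ac)
    also have "\<dots> = exp (- (ln (real n) + real n * ln (real K))) * exp (- t)"
      unfolding S_def max_exp_cancel by simp
    finally show "(\<Sum>J\<in>SFL K z. W K z J * c K z) \<le> exp (- (ln (real n) + real n * ln (real K))) * exp (- t)" .
  qed
  also have "\<dots> = (\<Sum>K\<in>{1..n}. exp (- t) / real n)"
  proof (rule sum.cong[OF refl])
    fix K assume K: "K \<in> {1..n}"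
    have Kp: "0 < real K" and np: "0 < real n" using K by auto
    have "(\<Sum>z\<in>Zs K. exp (- (ln (real n) + real n * ln (real K))) * exp (- t))
        = real K ^ n * (exp (- (ln (real n) + real n * ln (real K))) * exp (- t))" by (simp add: Zs_def card_PiE)
    also have "\<dots> = exp (real n * ln (real K)) * exp (- (ln (real n) + real n * ln (real K))) * exp (- t)"
      by (simp add: exp_nat_ln[OF Kp])
    also have "\<dots> = exp (- t) / exp (ln (real n))"
      by (simp add: exp_add[symmetric] exp_diff[symmetric] algebra_simps)
    also have "\<dots> = exp (- t) / real n" using np by simp
    finally show "(\<Sum>z\<in>Zs K. exp (- (ln (real n) + real n * ln (real K))) * exp (- t)) = exp (- t) / real n" .
  qed
  also have "\<dots> \<le> exp (- t)" by (cases "n = 0") auto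
  finally show ?thesis .
qed

lemma main_gen:
  assumes bad: "measure_pmf.prob M B \<le> e"
    and sub: "UNIV - G \<subseteq> B"
  shows "measure_pmf.prob M G \<ge> 1 - e"
proof -
  have "measure_pmf.prob M (UNIV - G) = 1 - measure_pmf.prob M G"
    using measure_pmf.prob_compl[of G M] by simp
  moreover have "measure_pmf.prob M (UNIV - G) \<le> measure_pmf.prob M B"
    by (rule measure_pmf.finite_measure_mono[OF sub]) simp
  ultimately show ?thesis using bad by linarith
qed

lemma main_ns:
  assumes P: "\<forall>i j. 0 \<le> P i j \<and> P i j \<le> 1 \<and> P i j = P j i"
    and feas: "\<forall>A. feasible n (Th A) (Zh A) (Jh A) (Kh A)" and t: "t > 0"
  shows "measure_pmf.prob (adj_pmf n P) {A. proj_op_sum n (Zh A) (Jh A) (Kh A) (\<lambda>i j. of_bool (A i j) - P i j)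
              - F1_ns 100 4 n (Jh A) (Kh A) \<le> 4 * t} \<ge> 1 - exp (- t)"
proof (rule main_gen[OF bad_ns[OF P t]])
  show "UNIV - {A. proj_op_sum n (Zh A) (Jh A) (Kh A) (\<lambda>i j. of_bool (A i j) - P i j)
              - F1_ns 100 4 n (Jh A) (Kh A) \<le> 4 * t} \<subseteq> {A. \<exists>K z J. K \<in> {1..n} \<and> clustering n K z \<and> sparsity_family n K z J \<and>
      proj_op_sum n z J K (\<lambda>i j. of_bool (A i j) - P i j) - F1_ns 100 4 n J K > 4 * t}"
  proof
    fix A assume A: "A \<in> UNIV - {A. proj_op_sum n (Zh A) (Jh A) (Kh A) (\<lambda>i j. of_bool (A i j) - P i j)
              - F1_ns 100 4 n (Jh A) (Kh A) \<le> 4 * t}"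
    have f: "feasible n (Th A) (Zh A) (Jh A) (Kh A)" using feas by blast
    have K: "Kh A \<in> {1..n}" and cl: "clustering n (Kh A) (Zh A)" and sf: "sparsity_family n (Kh A) (Zh A) (Jh A)"
      using f unfolding feasible_def by auto
    have gt: "proj_op_sum n (Zh A) (Jh A) (Kh A) (\<lambda>i j. of_bool (A i j) - P i j) - F1_ns 100 4 n (Jh A) (Kh A) > 4 * t"
      using A by auto
    show "A \<in> {A. \<exists>K z J. K \<in> {1..n} \<and> clustering n K z \<and> sparsity_family n K z J \<and>
      proj_op_sum n z J K (\<lambda>i j. of_bool (A i j) - P i j) - F1_ns 100 4 n J K > 4 * t}"
      using K cl sf gt by blast
  qed
qed

lemma main_s:
  assumes P: "\<forall>i j. 0 \<le> P i j \<and> P i j \<le> 1 \<and> P i j = P j i"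
    and feas: "\<forall>A. feasible n (Th A) (Zh A) (Jh A) (Kh A)" and t: "t > 0"
  shows "measure_pmf.prob (adj_pmf n P) {A. proj_op_sum n (Zh A) (Jh A) (Kh A) (\<lambda>i j. of_bool (A i j) - P i j)
              - F1_s 100 4 n (Zh A) (Jh A) (Kh A) \<le> 4 * t} \<ge> 1 - exp (- t)"
proof (rule main_gen[OF bad_s[OF P t]])
  show "UNIV - {A. proj_op_sum n (Zh A) (Jh A) (Kh A) (\<lambda>i j. of_bool (A i j) - P i j)
              - F1_s 100 4 n (Zh A) (Jh A) (Kh A) \<le> 4 * t} \<subseteq> {A. \<exists>K z J. K \<in> {1..n} \<and> clustering n K z \<and> sparsity_family n K z J \<and>
      proj_op_sum n z J K (\<lambda>i j. of_bool (A i j) - P i j) - F1_s 100 4 n z J K > 4 * t}"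
  proof
    fix A assume A: "A \<in> UNIV - {A. proj_op_sum n (Zh A) (Jh A) (Kh A) (\<lambda>i j. of_bool (A i j) - P i j)
              - F1_s 100 4 n (Zh A) (Jh A) (Kh A) \<le> 4 * t}"
    have f: "feasible n (Th A) (Zh A) (Jh A) (Kh A)" using feas by blast
    have K: "Kh A \<in> {1..n}" and cl: "clustering n (Kh A) (Zh A)" and sf: "sparsity_family n (Kh A) (Zh A) (Jh A)"
      using f unfolding feasible_def by auto
    have gt: "proj_op_sum n (Zh A) (Jh A) (Kh A) (\<lambda>i j. of_bool (A i j) - P i j) - F1_s 100 4 n (Zh A) (Jh A) (Kh A) > 4 * t"
      using A by auto
    show "A \<in> {A. \<exists>K z J. K \<in> {1..n} \<and> clustering n K z \<and> sparsity_family n K z J \<and>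
      proj_op_sum n z J K (\<lambda>i j. of_bool (A i j) - P i j) - F1_s 100 4 n z J K > 4 * t}"
      using K cl sf gt by blast
  qed
qed

theorem lemma8:
  "\<exists>C1 C2 :: real. C1 > 0 \<and> C2 > 0 \<and>
    (\<forall>(n::nat) (P :: nat \<Rightarrow> nat \<Rightarrow> real)
       (Pen :: nat \<Rightarrow> (nat \<Rightarrow> nat \<Rightarrow> nat set) \<Rightarrow> nat \<Rightarrow> real)
       (Th :: (nat \<Rightarrow> nat \<Rightarrow> bool) \<Rightarrow> nat \<Rightarrow> nat \<Rightarrow> real)
       (Zh :: (nat \<Rightarrow> nat \<Rightarrow> bool) \<Rightarrow> nat \<Rightarrow> nat)
       (Jh :: (nat \<Rightarrow> nat \<Rightarrow> bool) \<Rightarrow> nat \<Rightarrow> nat \<Rightarrow> nat set)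
       (Kh :: (nat \<Rightarrow> nat \<Rightarrow> bool) \<Rightarrow> nat) (t::real).
      (\<forall>i j. 0 \<le> P i j \<and> P i j \<le> 1 \<and> P i j = P j i) \<and>
      (\<forall>A. feasible n (Th A) (Zh A) (Jh A) (Kh A) \<and>
           (\<forall>\<Theta> z J K. feasible n \<Theta> z J K \<longrightarrow>
              objective n Pen A (Th A) (Zh A) (Jh A) (Kh A) \<le> objective n Pen A \<Theta> z J K)) \<and>
      t > 0 \<longrightarrow>
      measure_pmf.prob (adj_pmf n P)
        {A. proj_op_sum n (Zh A) (Jh A) (Kh A) (\<lambda>i j. of_bool (A i j) - P i j)
              - F1_ns C1 C2 n (Jh A) (Kh A) \<le> C2 * t} \<ge> 1 - exp (- t) \<and>
      measure_pmf.prob (adj_pmf n P)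
        {A. proj_op_sum n (Zh A) (Jh A) (Kh A) (\<lambda>i j. of_bool (A i j) - P i j)
              - F1_s C1 C2 n (Zh A) (Jh A) (Kh A) \<le> C2 * t} \<ge> 1 - exp (- t))"

proof (rule exI[of _ "100::real"], rule exI[of _ "4::real"], intro conjI)
  show "(100::real) > 0" by simp
  show "(4::real) > 0" by simp
  show "(\<forall>(n::nat) (P :: nat \<Rightarrow> nat \<Rightarrow> real)
       (Pen :: nat \<Rightarrow> (nat \<Rightarrow> nat \<Rightarrow> nat set) \<Rightarrow> nat \<Rightarrow> real)
       (Th :: (nat \<Rightarrow> nat \<Rightarrow> bool) \<Rightarrow> nat \<Rightarrow> nat \<Rightarrow> real)
       (Zh :: (nat \<Rightarrow> nat \<Rightarrow> bool) \<Rightarrow> nat \<Rightarrow> nat)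
       (Jh :: (nat \<Rightarrow> nat \<Rightarrow> bool) \<Rightarrow> nat \<Rightarrow> nat \<Rightarrow> nat set)
       (Kh :: (nat \<Rightarrow> nat \<Rightarrow> bool) \<Rightarrow> nat) (t::real).
      (\<forall>i j. 0 \<le> P i j \<and> P i j \<le> 1 \<and> P i j = P j i) \<and>
      (\<forall>A. feasible n (Th A) (Zh A) (Jh A) (Kh A) \<and>
           (\<forall>\<Theta> z J K. feasible n \<Theta> z J K \<longrightarrow>
              objective n Pen A (Th A) (Zh A) (Jh A) (Kh A) \<le> objective n Pen A \<Theta> z J K)) \<and>
      t > 0 \<longrightarrow>
      measure_pmf.prob (adj_pmf n P)
        {A. proj_op_sum n (Zh A) (Jh A) (Kh A) (\<lambda>i j. of_bool (A i j) - P i j)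
              - F1_ns 100 4 n (Jh A) (Kh A) \<le> 4 * t} \<ge> 1 - exp (- t) \<and>
      measure_pmf.prob (adj_pmf n P)
        {A. proj_op_sum n (Zh A) (Jh A) (Kh A) (\<lambda>i j. of_bool (A i j) - P i j)
              - F1_s 100 4 n (Zh A) (Jh A) (Kh A) \<le> 4 * t} \<ge> 1 - exp (- t))"
  proof (intro allI impI)
    fix n :: nat and P :: "nat \<Rightarrow> nat \<Rightarrow> real"
      and Pen :: "nat \<Rightarrow> (nat \<Rightarrow> nat \<Rightarrow> nat set) \<Rightarrow> nat \<Rightarrow> real"
      and Th :: "(nat \<Rightarrow> nat \<Rightarrow> bool) \<Rightarrow> nat \<Rightarrow> nat \<Rightarrow> real"
      and Zh :: "(nat \<Rightarrow> nat \<Rightarrow> bool) \<Rightarrow> nat \<Rightarrow> nat"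
      and Jh :: "(nat \<Rightarrow> nat \<Rightarrow> bool) \<Rightarrow> nat \<Rightarrow> nat \<Rightarrow> nat set"
      and Kh :: "(nat \<Rightarrow> nat \<Rightarrow> bool) \<Rightarrow> nat" and t :: real
    assume H: "(\<forall>i j. 0 \<le> P i j \<and> P i j \<le> 1 \<and> P i j = P j i) \<and>
      (\<forall>A. feasible n (Th A) (Zh A) (Jh A) (Kh A) \<and>
           (\<forall>\<Theta> z J K. feasible n \<Theta> z J K \<longrightarrow>
              objective n Pen A (Th A) (Zh A) (Jh A) (Kh A) \<le> objective n Pen A \<Theta> z J K)) \<and>
      (t::real) > 0"
    then have P: "\<forall>i j. 0 \<le> P i j \<and> P i j \<le> 1 \<and> P i j = P j i"
      and feas: "\<forall>A. feasible n (Th A) (Zh A) (Jh A) (Kh A)" and t: "t > 0" by blast+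
    show "measure_pmf.prob (adj_pmf n P)
        {A. proj_op_sum n (Zh A) (Jh A) (Kh A) (\<lambda>i j. of_bool (A i j) - P i j)
              - F1_ns 100 4 n (Jh A) (Kh A) \<le> 4 * t} \<ge> 1 - exp (- t) \<and>
      measure_pmf.prob (adj_pmf n P)
        {A. proj_op_sum n (Zh A) (Jh A) (Kh A) (\<lambda>i j. of_bool (A i j) - P i j)
              - F1_s 100 4 n (Zh A) (Jh A) (Kh A) \<le> 4 * t} \<ge> 1 - exp (- t)"
      using main_ns[OF P feas t] main_s[OF P feas t] by blast
  qed
qed


end
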